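(* Let $L\geq 2$, $k \geq 1$, $m\geq 1$, and $\mathcal{M} = (m_1,\dots,m_L)$ positive integers with $m_1 = d$ and $m_\ell \leq m$ for all $1 \leq \ell \leq L$. For any points $X_1,\dots,X_n \in \mathcal{B}_1(\mathbb{R}^d)$, $$\mathbb{E}_{\epsilon}[\|\mathbb{S}_n\|_{F_{L,\mathcal{M},k}(1)}] \leq 64 \sqrt{\frac{(L-1)k m (m+1)}{n}} \left(\sqrt{(L+1)\log(2) + \frac12 \log(L^2+1)} + \frac{\sqrt{\pi}}{2}\right).$$
   Context: A $k$-maxout network of depth $L$ and widths $\mathcal{M}$ is $f(x) = \frac{1}{\sqrt{m_L}}\sum_{i=1}^{m_L} a_i \max_{j \in [k]} \langle w^{(L-1)}_{i,j}, (x^{(L-1)},1)\rangle$, $a_i\in\mathbb{R}$, where $x^{(1)} = x$ and for $2 \leq \ell \leq L-1$, $1\le i\le m_\ell$: $x^{(\ell)}_i = \frac{1}{\sqrt{m_\ell}} \max_{j\in[k]} \langle w^{(\ell-1)}_{i,j}, (x^{(\ell-1)},1)\rangle$, $w^{(\ell-1)}_{i,j}\in\mathbb{R}^{m_{\ell-1}+1}$. $F_{L,\mathcal{M},k}(1)$ is the set of such networks with $\|w^{(\ell)}_{i,j}\|_2 \leq 1$ for all $\ell,i,j$ and $\|a\|_2 \leq 1$. $\mathcal{B}_1(\mathbb{R}^d)$ is the closed unit Euclidean ball. With $\epsilon_1,\dots,\epsilon_n$ i.i.d. Rademacher variables, $\|\mathbb{S}_n\|_{\mathcal{F}} = \sup_{f\in\mathcal{F}}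 |\frac1n\sum_{i=1}^n\epsilon_i f(X_i)|$, and $\mathbb{E}_\epsilon$ is expectation over the $\epsilon_i$ with the points fixed. *)

theory Defs
  imports "HOL-Analysis.Analysis"
begin

(* Conventions: vectors of varying dimension are functions nat => real; a vector of
   R^D is represented by its components at indices 0..D-1 (other values are ignored).  Weights: W l i j p = p-th component of w^{(l)}_{i,j}
   (l = 1..L-1, neuron i < M (l+1), piece j < k, component p <= M l, where
   the component p = M l multiplies the appended constant 1, i.e. the bias). *)

definition maxout_pre :: "(nat \<Rightarrow> nat) \<Rightarrow> nat \<Rightarrow> (nat \<Rightarrow> nat \<Rightarrow> nat \<Rightarrow> nat \<Rightarrow> real)
    \<Rightarrow> nat \<Rightarrow> (nat \<Rightarrow> real) \<Rightarrow> nat \<Rightarrow> real" where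
  "maxout_pre M k W l v i =
     Max ((\<lambda>j. (\<Sum>p<M l. W l i j p * v p) + W l i j (M l)) ` {..<k})"

fun maxout_hidden :: "(nat \<Rightarrow> nat) \<Rightarrow> nat \<Rightarrow> (nat \<Rightarrow> nat \<Rightarrow> nat \<Rightarrow> nat \<Rightarrow> real)
    \<Rightarrow> nat \<Rightarrow> (nat \<Rightarrow> real) \<Rightarrow> (nat \<Rightarrow> real)" where
  "maxout_hidden M k W 0 x = x"
| "maxout_hidden M k W (Suc 0) x = x"
| "maxout_hidden M k W (Suc (Suc l)) x =
     (\<lambda>i. (1 / sqrt (real (M (Suc (Suc l))))) *
            maxout_pre M k W (Suc l) (maxout_hidden M k W (Suc l) x) i)"

definition maxout_net :: "nat \<Rightarrow> (nat \<Rightarrow> nat) \<Rightarrow> nat \<Rightarrow> (nat \<Rightarrow> nat \<Rightarrow> nat \<Rightarrow> nat \<Rightarrow> real)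
    \<Rightarrow> (nat \<Rightarrow> real) \<Rightarrow> (nat \<Rightarrow> real) \<Rightarrow> real" where
  "maxout_net L M k W a x =
     (1 / sqrt (real (M L))) *
     (\<Sum>i<M L. a i * maxout_pre M k W (L - 1) (maxout_hidden M k W (L - 1) x) i)"

definition maxout_class :: "nat \<Rightarrow> (nat \<Rightarrow> nat) \<Rightarrow> nat \<Rightarrow> ((nat \<Rightarrow> real) \<Rightarrow> real) set" where
  "maxout_class L M k =
     {maxout_net L M k W a | W a.
        (\<forall>l \<in> {1..L-1}. \<forall>i < M (Suc l). \<forall>j < k. (\<Sum>p\<le>M l. (W l i j p)^2) \<le> 1) \<and>
        (\<Sum>i<M L. (a i)^2) \<le> 1}"

definition rademacher_emp :: "nat \<Rightarrow> (nat \<Rightarrow> 'x) \<Rightarrow> ('x \<Rightarrow> real) set \<Rightarrow> real" where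
  "rademacher_emp n X F =
     (\<Sum>\<epsilon> \<in> ({..<n} \<rightarrow>\<^sub>E {-1, 1::real}).
        (SUP f\<in>F. \<bar>(1 / real n) * (\<Sum>i<n. \<epsilon> i * f (X i))\<bar>)) / 2 ^ n"

end

theory Submission
  imports Defs "HOL-Probability.Hoeffding"
begin


lemma cosh_bound: fixes x :: real shows "exp x + exp (-x) \<le> 2 * exp (x^2/2)"
proof -
  define a where "a = \<bar>x\<bar>"
  have a: "a \<ge> 0" by (simp add: a_def)
  have h: "- (2*a) * (1/2) + ln (1 + (1/2) * (exp (2*a) - 1)) \<le> (2*a)^2/8"
    using Hoeffdings_lemma_aux[of "2*a" "1/2"] a by simp
  have "exp (2*a) > 0" by simp
  hence pos: "1 + (1/2) * (exp (2*a) - 1) > 0" by (simp add: field_simps add_pos_pos)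
  have "ln (1 + (1/2) * (exp (2*a) - 1)) \<le> x^2/2 + a"
    using h by (simp add: a_def power2_eq_square algebra_simps)
  hence "1 + (1/2) * (exp (2*a) - 1) \<le> exp (x^2/2 + a)"
    using pos by (metis exp_le_cancel_iff exp_ln)
  hence "(exp (2*a) + 1) \<le> 2 * exp (x^2/2) * exp a"
    by (simp add: exp_add algebra_simps)
  hence "(exp (2*a) + 1) / exp a \<le> 2 * exp (x^2/2)"
    by (simp add: divide_le_eq)
  moreover have "(exp (2*a) + 1) / exp a = exp a + exp (-a)"
    by (simp add: field_simps exp_minus flip: exp_add)
  moreover have "exp a + exp (-a) = exp x + exp (-x)"
    by (cases "x \<ge> 0") (auto simp: a_def)
  ultimately show ?thesis by simp
qed

definition Eps :: "nat \<Rightarrow> (nat \<Rightarrow> real) set" where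
  "Eps n = ({..<n} \<rightarrow>\<^sub>E {-1, 1::real})"

lemma card_Eps: "card (Eps n) = 2^n"
  by (auto simp: Eps_def card_PiE numeral_2_eq_2)

lemma finite_Eps: "finite (Eps n)"
  by (simp add: Eps_def finite_PiE)

lemma Eps_ne: "Eps n \<noteq> {}"
  using card_Eps[of n] by auto

lemma sum_exp_Eps:
  fixes v :: "nat \<Rightarrow> real"
  shows "(\<Sum>e\<in>Eps n. exp (lam * (\<Sum>t<n. e t * v t))) \<le> 2^n * exp (lam^2 * (\<Sum>t<n. (v t)^2) / 2)"
proof -
  have "(\<Sum>e\<in>Eps n. exp (lam * (\<Sum>t<n. e t * v t))) = (\<Sum>e\<in>Eps n. \<Prod>t<n. exp (lam * (e t * v t)))"
    by (simp add: sum_distrib_left exp_sum)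
  also have "\<dots> = (\<Prod>t<n. \<Sum>y\<in>{-1,1::real}. exp (lam * (y * v t)))"
    unfolding Eps_def by (rule prod_sum_PiE[symmetric]) auto
  also have "\<dots> = (\<Prod>t<n. exp (lam * v t) + exp (- (lam * v t)))"
    by (simp add: add.commute)
  also have "\<dots> \<le> (\<Prod>t<n. 2 * exp ((lam * v t)^2/2))"
    by (intro prod_mono) (auto intro: cosh_bound add_nonneg_nonneg)
  also have "\<dots> = 2^n * exp (lam^2 * (\<Sum>t<n. (v t)^2) / 2)"
    by (simp add: prod.distrib exp_sum[symmetric] sum_divide_distrib sum_distrib_left power_mult_distrib)
  finally show ?thesis .
qed

lemma massart:
  fixes Q :: "'q set" and v :: "'q \<Rightarrow> nat \<Rightarrow> real"
  assumes fin: "finite Q" and ne: "Q \<noteq> {}" and r: "r > 0"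
    and bnd: "\<And>q. q \<in> Q \<Longrightarrow> (\<Sum>t<n. (v q t)^2) \<le> r^2"
    and K: "real (card Q) \<le> K"
  shows "(\<Sum>e\<in>Eps n. Max ((\<lambda>q. \<bar>\<Sum>t<n. e t * v q t\<bar>) ` Q)) / 2^n \<le> r * sqrt (2 * ln (2*K))"
proof -
  define Y where "Y e = Max ((\<lambda>q. \<bar>\<Sum>t<n. e t * v q t\<bar>) ` Q)" for e
  have "card Q \<ge> 1" using fin ne by (simp add: Suc_leI card_gt_0_iff)
  hence K1: "K \<ge> 1" using K by linarith
  define c where "c = ln (2*K)"
  have c: "c > 0" unfolding c_def using K1 by simp
  define s where "s = sqrt (2*c)"
  have s: "s > 0" "c = s^2/2" using c by (auto simp: s_def)
  define lam where "lam = s / r"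
  have lam: "lam > 0" using s r by (simp add: lam_def)
  have step1: "exp (lam * Y e) \<le> (\<Sum>q\<in>Q. exp (lam * (\<Sum>t<n. e t * v q t)) + exp ((-lam) * (\<Sum>t<n. e t * v q t)))" for e
  proof -
    have "Y e \<in> (\<lambda>q. \<bar>\<Sum>t<n. e t * v q t\<bar>) ` Q"
      unfolding Y_def using fin ne by (intro Max_in) auto
    then obtain q where q: "q \<in> Q" "Y e = \<bar>\<Sum>t<n. e t * v q t\<bar>" by auto
    have "exp (lam * Y e) \<le> exp (lam * (\<Sum>t<n. e t * v q t)) + exp ((-lam) * (\<Sum>t<n. e t * v q t))"
    proof (cases "(\<Sum>t<n. e t * v q t) \<ge> 0")
      case True
      then show ?thesis using q(2) by (simp add: add_increasing2)
    next
      case False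
      then show ?thesis using q(2) by (simp add: add_increasing)
    qed
    also have "\<dots> \<le> (\<Sum>q\<in>Q. exp (lam * (\<Sum>t<n. e t * v q t)) + exp ((-lam) * (\<Sum>t<n. e t * v q t)))"
      by (rule member_le_sum[where f = "\<lambda>q. exp (lam * (\<Sum>t<n. e t * v q t)) + exp ((-lam) * (\<Sum>t<n. e t * v q t))"]) (use q fin in auto)
    finally show ?thesis .
  qed
  have each: "(\<Sum>e\<in>Eps n. exp (l * (\<Sum>t<n. e t * v q t))) \<le> 2^n * exp (lam^2 * r^2 / 2)"
    if "q \<in> Q" "l^2 = lam^2" for q l
  proof -
    have "(\<Sum>e\<in>Eps n. exp (l * (\<Sum>t<n. e t * v q t))) \<le> 2^n * exp (l^2 * (\<Sum>t<n. (v q t)^2) / 2)"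
      by (rule sum_exp_Eps)
    also have "\<dots> \<le> 2^n * exp (lam^2 * r^2 / 2)"
      using bnd[OF that(1)] that(2) by (simp add: mult_left_mono)
    finally show ?thesis .
  qed
  have step2: "(\<Sum>e\<in>Eps n. exp (lam * Y e)) \<le> 2 * K * 2^n * exp (lam^2 * r^2 / 2)"
  proof -
    have "(\<Sum>e\<in>Eps n. exp (lam * Y e)) \<le> (\<Sum>e\<in>Eps n. \<Sum>q\<in>Q. exp (lam * (\<Sum>t<n. e t * v q t)) + exp ((-lam) * (\<Sum>t<n. e t * v q t)))"
      by (rule sum_mono) (rule step1)
    also have "\<dots> = (\<Sum>q\<in>Q. (\<Sum>e\<in>Eps n. exp (lam * (\<Sum>t<n. e t * v q t))) + (\<Sum>e\<in>Eps n. exp ((-lam) * (\<Sum>t<n. e t * v q t))))"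
      by (simp add: sum.swap[of _ "Eps n" Q] sum.distrib)
    also have "\<dots> \<le> (\<Sum>q\<in>Q. 2 * (2^n * exp (lam^2 * r^2 / 2)))"
    proof (rule sum_mono)
      fix q assume q: "q \<in> Q"
      have A: "(\<Sum>e\<in>Eps n. exp (lam * (\<Sum>t<n. e t * v q t))) \<le> 2^n * exp (lam^2 * r^2 / 2)"
        by (rule each[OF q]) simp
      have B: "(\<Sum>e\<in>Eps n. exp ((-lam) * (\<Sum>t<n. e t * v q t))) \<le> 2^n * exp (lam^2 * r^2 / 2)"
        by (rule each[OF q]) simp
      show "(\<Sum>e\<in>Eps n. exp (lam * (\<Sum>t<n. e t * v q t))) + (\<Sum>e\<in>Eps n. exp ((-lam) * (\<Sum>t<n. e t * v q t)))
         \<le> 2 * (2^n * exp (lam^2 * r^2 / 2))"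
        using add_mono[OF A B] by simp
    qed
    also have "\<dots> = real (card Q) * (2 * (2^n * exp (lam^2 * r^2 / 2)))"
      by simp
    also have "\<dots> \<le> K * (2 * (2^n * exp (lam^2 * r^2 / 2)))"
      by (rule mult_right_mono) (use K in auto)
    finally show ?thesis by (simp add: algebra_simps)
  qed
  have jensen: "exp (lam * (\<Sum>e\<in>Eps n. (1/2^n) * Y e)) \<le> (\<Sum>e\<in>Eps n. (1/2^n) * exp (lam * Y e))"
    using convex_on_sum[of "Eps n" UNIV "\<lambda>x. exp (lam * x)" "\<lambda>_. 1/2^n" Y] convex_on_exp[of lam] lam
    by (simp add: finite_Eps Eps_ne card_Eps)
  have avg: "(\<Sum>e\<in>Eps n. (1/2^n) * Y e) = (\<Sum>e\<in>Eps n. Y e) / 2^n"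
    by (simp add: sum_divide_distrib)
  have avg2: "(\<Sum>e\<in>Eps n. (1/2^n) * exp (lam * Y e)) = (\<Sum>e\<in>Eps n. exp (lam * Y e)) / 2^n"
    by (simp add: sum_divide_distrib)
  have "exp (lam * ((\<Sum>e\<in>Eps n. Y e) / 2^n)) \<le> 2 * K * exp (lam^2 * r^2 / 2)"
  proof -
    have "(\<Sum>e\<in>Eps n. exp (lam * Y e)) / 2^n \<le> 2 * K * exp (lam^2 * r^2 / 2)"
      using step2 by (simp add: divide_le_eq algebra_simps)
    thus ?thesis using jensen unfolding avg avg2 by linarith
  qed
  hence "lam * ((\<Sum>e\<in>Eps n. Y e) / 2^n) \<le> ln (2 * K * exp (lam^2 * r^2 / 2))"
    using K1 by (subst ln_ge_iff) auto
  also have "\<dots> = c + lam^2 * r^2 / 2"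
    using K1 by (simp add: ln_mult c_def)
  finally have "lam * ((\<Sum>e\<in>Eps n. Y e) / 2^n) \<le> c + lam^2 * r^2 / 2" .
  hence "(\<Sum>e\<in>Eps n. Y e) / 2^n \<le> (c + lam^2 * r^2 / 2) / lam"
    using lam by (simp add: le_divide_eq mult.commute)
  also have "\<dots> = r * s"
    using s r unfolding lam_def by (simp add: field_simps power2_eq_square)
  finally show ?thesis unfolding Y_def s_def c_def .
qed



lemma L2_sq: "(L2_set f A)^2 = (\<Sum>i\<in>A. (f i)^2)"
  by (simp add: L2_set_def sum_nonneg)

lemma sq_le_of_le_sqrt: "0 \<le> a \<Longrightarrow> a \<le> sqrt b \<Longrightarrow> 0 \<le> b \<Longrightarrow> a^2 \<le> (b::real)"
  using power_mono[of a "sqrt b" 2] by simp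

lemma Max_diff_le:
  fixes f g :: "'a \<Rightarrow> real"
  assumes "finite K" "K \<noteq> {}" "\<And>j. j \<in> K \<Longrightarrow> \<bar>f j - g j\<bar> \<le> c"
  shows "\<bar>Max (f ` K) - Max (g ` K)\<bar> \<le> c"
proof -
  have "Max (f ` K) \<in> f ` K" using assms by (intro Max_in) auto
  then obtain j1 where j1: "j1 \<in> K" "Max (f ` K) = f j1" by auto
  have "Max (g ` K) \<in> g ` K" using assms by (intro Max_in) auto
  then obtain j2 where j2: "j2 \<in> K" "Max (g ` K) = g j2" by auto
  have "g j1 \<le> Max (g ` K)" using assms j1 by (intro Max_ge) auto
  moreover have "f j2 \<le> Max (f ` K)" using assms j2 by (intro Max_ge) auto
  moreover have "f j1 - g j1 \<le> c" "g j2 - f j2 \<le> c"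
    using abs_le_D1[OF assms(3)[OF j1(1)]] abs_le_D2[OF assms(3)[OF j2(1)]] by auto
  ultimately show ?thesis unfolding j1(2) j2(2) by (intro abs_leI; linarith)
qed

lemma Max_abs_le:
  fixes f :: "'a \<Rightarrow> real"
  assumes "finite K" "K \<noteq> {}" "\<And>j. j \<in> K \<Longrightarrow> \<bar>f j\<bar> \<le> c"
  shows "\<bar>Max (f ` K)\<bar> \<le> c"
proof -
  have "Max (f ` K) \<in> f ` K" using assms by (intro Max_in) auto
  then obtain j1 where j1: "j1 \<in> K" "Max (f ` K) = f j1" by auto
  thus ?thesis using assms(3) by auto
qed

lemma aff_gen:
  fixes w u :: "nat \<Rightarrow> real"
  shows "\<bar>(\<Sum>p<N. w p * u p) + w N * c\<bar> \<le> L2_set w {..N} * sqrt ((L2_set u {..<N})^2 + c^2)"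
proof -
  define b where "b p = (if p < N then u p else c)" for p
  have "(\<Sum>p<N. w p * u p) + w N * c = (\<Sum>p<Suc N. w p * b p)"
    by (simp add: b_def)
  also have "\<dots> = (\<Sum>p\<in>{..N}. w p * b p)"
    by (simp add: lessThan_Suc_atMost)
  finally have eq: "(\<Sum>p<N. w p * u p) + w N * c = (\<Sum>p\<in>{..N}. w p * b p)" .
  have "\<bar>\<Sum>p\<in>{..N}. w p * b p\<bar> \<le> (\<Sum>p\<in>{..N}. \<bar>w p\<bar> * \<bar>b p\<bar>)"
    by (rule order_trans[OF sum_abs]) (simp add: abs_mult)
  also have "\<dots> \<le> L2_set w {..N} * L2_set b {..N}"
    by (rule L2_set_mult_ineq)
  also have "L2_set b {..N} = sqrt ((L2_set u {..<N})^2 + c^2)"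
  proof -
    have "(\<Sum>p\<in>{..N}. (b p)^2) = (\<Sum>p<Suc N. (b p)^2)" by (simp add: lessThan_Suc_atMost)
    also have "\<dots> = (\<Sum>p<N. (u p)^2) + c^2" by (simp add: b_def)
    finally show ?thesis unfolding L2_set_def by (simp add: L2_sq[unfolded L2_set_def])
  qed
  finally show ?thesis unfolding eq .
qed

definition valid :: "nat \<Rightarrow> (nat \<Rightarrow> nat) \<Rightarrow> nat \<Rightarrow> (nat \<Rightarrow> nat \<Rightarrow> nat \<Rightarrow> nat \<Rightarrow> real) \<Rightarrow> bool" where
  "valid L M k W = (\<forall>l \<in> {1..L-1}. \<forall>i < M (Suc l). \<forall>j < k. (\<Sum>p\<le>M l. (W l i j p)^2) \<le> 1)"

lemma valid_L2: "valid L M k W \<Longrightarrow> l \<in> {1..L-1} \<Longrightarrow> i < M (Suc l) \<Longrightarrow> j < k \<Longrightarrow> L2_set (W l i j) {..M l} \<le> 1"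
  unfolding valid_def L2_set_def by auto

lemma pre_abs:
  assumes "k \<ge> 1" "\<And>j. j < k \<Longrightarrow> L2_set (W l i j) {..M l} \<le> 1"
  shows "\<bar>maxout_pre M k W l v i\<bar> \<le> sqrt ((L2_set v {..<M l})^2 + 1)"
  unfolding maxout_pre_def
proof (rule Max_abs_le)
  fix j assume j: "j \<in> {..<k}"
  have "\<bar>(\<Sum>p<M l. W l i j p * v p) + W l i j (M l) * 1\<bar> \<le> L2_set (W l i j) {..M l} * sqrt ((L2_set v {..<M l})^2 + 1^2)"
    by (rule aff_gen)
  also have "\<dots> \<le> 1 * sqrt ((L2_set v {..<M l})^2 + 1^2)"
    by (rule mult_right_mono) (use assms(2) j in auto)
  finally show "\<bar>(\<Sum>p<M l. W l i j p * v p) + W l i j (M l)\<bar> \<le> sqrt ((L2_set v {..<M l})^2 + 1)" by simp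
qed (use assms(1) in \<open>auto simp: lessThan_empty_iff\<close>)

lemma pre_lip_v:
  assumes "k \<ge> 1" "\<And>j. j < k \<Longrightarrow> L2_set (W l i j) {..M l} \<le> 1"
  shows "\<bar>maxout_pre M k W l v i - maxout_pre M k W l v' i\<bar> \<le> L2_set (\<lambda>p. v p - v' p) {..<M l}"
  unfolding maxout_pre_def
proof (rule Max_diff_le)
  fix j assume j: "j \<in> {..<k}"
  have eq: "((\<Sum>p<M l. W l i j p * v p) + W l i j (M l)) - ((\<Sum>p<M l. W l i j p * v' p) + W l i j (M l))
      = (\<Sum>p<M l. W l i j p * (v p - v' p)) + W l i j (M l) * 0"
    by (simp add: sum_subtractf algebra_simps)
  have "\<bar>(\<Sum>p<M l. W l i j p * (v p - v' p)) + W l i j (M l) * 0\<bar> \<le> L2_set (W l i j) {..M l} * sqrt ((L2_set (\<lambda>p. v p - v' p) {..<M l})^2 + 0^2)"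
    by (rule aff_gen)
  also have "\<dots> \<le> 1 * sqrt ((L2_set (\<lambda>p. v p - v' p) {..<M l})^2 + 0^2)"
    by (rule mult_right_mono) (use assms(2) j in auto)
  finally show "\<bar>((\<Sum>p<M l. W l i j p * v p) + W l i j (M l)) - ((\<Sum>p<M l. W l i j p * v' p) + W l i j (M l))\<bar> \<le> L2_set (\<lambda>p. v p - v' p) {..<M l}"
    unfolding eq by simp
qed (use assms(1) in \<open>auto simp: lessThan_empty_iff\<close>)

lemma pre_lip_w:
  assumes "k \<ge> 1" "\<And>j. j < k \<Longrightarrow> L2_set (\<lambda>p. W l i j p - W' l i j p) {..M l} \<le> eta"
  shows "\<bar>maxout_pre M k W l v i - maxout_pre M k W' l v i\<bar> \<le> eta * sqrt ((L2_set v {..<M l})^2 + 1)"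
  unfolding maxout_pre_def
proof (rule Max_diff_le)
  fix j assume j: "j \<in> {..<k}"
  have eq: "((\<Sum>p<M l. W l i j p * v p) + W l i j (M l)) - ((\<Sum>p<M l. W' l i j p * v p) + W' l i j (M l))
      = (\<Sum>p<M l. (W l i j p - W' l i j p) * v p) + (W l i j (M l) - W' l i j (M l)) * 1"
    by (simp add: sum_subtractf algebra_simps)
  have "\<bar>(\<Sum>p<M l. (W l i j p - W' l i j p) * v p) + (W l i j (M l) - W' l i j (M l)) * 1\<bar>
      \<le> L2_set (\<lambda>p. W l i j p - W' l i j p) {..M l} * sqrt ((L2_set v {..<M l})^2 + 1^2)"
    by (rule aff_gen[where w = "\<lambda>p. W l i j p - W' l i j p"])
  also have "\<dots> \<le> eta * sqrt ((L2_set v {..<M l})^2 + 1^2)"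
    by (rule mult_right_mono) (use assms(2) j in auto)
  finally show "\<bar>((\<Sum>p<M l. W l i j p * v p) + W l i j (M l)) - ((\<Sum>p<M l. W' l i j p * v p) + W' l i j (M l))\<bar> \<le> eta * sqrt ((L2_set v {..<M l})^2 + 1)"
    unfolding eq by simp
qed (use assms(1) in \<open>auto simp: lessThan_empty_iff\<close>)

lemma L2_scaled:
  assumes "m' \<ge> 1" "\<And>i. i < m' \<Longrightarrow> \<bar>f i\<bar> \<le> B"
  shows "L2_set (\<lambda>i. 1 / sqrt (real m') * f i) {..<m'} \<le> B"
proof -
  have B: "B \<ge> 0" using assms(2)[of 0] assms(1) by auto
  have "(\<Sum>i<m'. (1 / sqrt (real m') * f i)^2) \<le> (\<Sum>i<m'. B^2 / real m')"
  proof (rule sum_mono)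
    fix i assume "i \<in> {..<m'}"
    hence "(f i)^2 \<le> B^2" using assms(2) by (simp add: abs_le_square_iff[symmetric] B)
    thus "(1 / sqrt (real m') * f i)^2 \<le> B^2 / real m'"
      using assms(1) by (simp add: power_mult_distrib power_divide divide_right_mono)
  qed
  also have "\<dots> = B^2" using assms(1) by simp
  finally show ?thesis unfolding L2_set_def using B by (simp add: real_sqrt_le_iff real_le_lsqrt)
qed

lemma hid_step: "l \<ge> 1 \<Longrightarrow> maxout_hidden M k W (Suc l) x = (\<lambda>i. 1 / sqrt (real (M (Suc l))) * maxout_pre M k W l (maxout_hidden M k W l x) i)"
  by (cases l) auto

lemma hid_norm:
  assumes val: "valid L M k W" and k: "k \<ge> 1" and hM: "\<forall>l\<in>{1..L}. M l \<ge> 1"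
    and x: "L2_set x {..<M 1} \<le> 1"
  shows "1 \<le> l \<Longrightarrow> l \<le> L \<Longrightarrow> L2_set (maxout_hidden M k W l x) {..<M l} \<le> sqrt (real l)"
proof (induction l rule: nat_induct_at_least)
  case base
  then show ?case using x by simp
next
  case (Suc l)
  have l: "l \<in> {1..L-1}" using Suc by auto
  have IH: "(L2_set (maxout_hidden M k W l x) {..<M l})^2 \<le> real l"
    using Suc by (intro sq_le_of_le_sqrt) auto
  show ?case unfolding hid_step[OF Suc(1)]
  proof (rule L2_scaled)
    show "1 \<le> M (Suc l)" using hM Suc by auto
    fix i assume i: "i < M (Suc l)"
    have "\<bar>maxout_pre M k W l (maxout_hidden M k W l x) i\<bar> \<le> sqrt ((L2_set (maxout_hidden M k W l x) {..<M l})^2 + 1)"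
      by (rule pre_abs[OF k]) (rule valid_L2[OF val l i])
    also have "\<dots> \<le> sqrt (real (Suc l))" using IH by simp
    finally show "\<bar>maxout_pre M k W l (maxout_hidden M k W l x) i\<bar> \<le> sqrt (real (Suc l))" .
  qed
qed

lemma hid_lip_x:
  assumes val: "valid L M k W" and k: "k \<ge> 1" and hM: "\<forall>l\<in>{1..L}. M l \<ge> 1"
  shows "1 \<le> l \<Longrightarrow> l \<le> L \<Longrightarrow> L2_set (\<lambda>p. maxout_hidden M k W l x p - maxout_hidden M k W l y p) {..<M l} \<le> L2_set (\<lambda>p. x p - y p) {..<M 1}"
proof (induction l rule: nat_induct_at_least)
  case base
  then show ?case by simp
next
  case (Suc l)
  have l: "l \<in> {1..L-1}" using Suc by auto
  have IH: "L2_set (\<lambda>p. maxout_hidden M k W l x p - maxout_hidden M k W l y p) {..<M l} \<le> L2_set (\<lambda>p. x p - y p) {..<M 1}"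
    using Suc by auto
  have "L2_set (\<lambda>i. 1 / sqrt (real (M (Suc l))) * (maxout_pre M k W l (maxout_hidden M k W l x) i - maxout_pre M k W l (maxout_hidden M k W l y) i)) {..<M (Suc l)}
     \<le> L2_set (\<lambda>p. x p - y p) {..<M 1}"
  proof (rule L2_scaled)
    show "1 \<le> M (Suc l)" using hM Suc by auto
    fix i assume i: "i < M (Suc l)"
    show "\<bar>maxout_pre M k W l (maxout_hidden M k W l x) i - maxout_pre M k W l (maxout_hidden M k W l y) i\<bar> \<le> L2_set (\<lambda>p. x p - y p) {..<M 1}"
    proof -
      have "\<bar>maxout_pre M k W l (maxout_hidden M k W l x) i - maxout_pre M k W l (maxout_hidden M k W l y) i\<bar>
         \<le> L2_set (\<lambda>p. maxout_hidden M k W l x p - maxout_hidden M k W l y p) {..<M l}"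
        by (rule pre_lip_v[OF k]) (rule valid_L2[OF val l i])
      thus ?thesis using IH by linarith
    qed
  qed
  thus ?case unfolding hid_step[OF Suc(1)] by (simp add: algebra_simps)
qed

lemma hid_lip_w:
  assumes val: "valid L M k W" and val': "valid L M k W'" and k: "k \<ge> 1" and hM: "\<forall>l\<in>{1..L}. M l \<ge> 1"
    and x: "L2_set x {..<M 1} \<le> 1" and eta: "eta \<ge> 0"
    and close: "\<And>l i j. l \<in> {1..L-1} \<Longrightarrow> i < M (Suc l) \<Longrightarrow> j < k \<Longrightarrow> L2_set (\<lambda>p. W l i j p - W' l i j p) {..M l} \<le> eta"
  shows "1 \<le> l \<Longrightarrow> l \<le> L \<Longrightarrow> L2_set (\<lambda>p. maxout_hidden M k W l x p - maxout_hidden M k W' l x p) {..<M l} \<le> eta * (real l - 1) * sqrt (real L)"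
proof (induction l rule: nat_induct_at_least)
  case base
  then show ?case by (simp add: L2_set_def)
next
  case (Suc l)
  have l: "l \<in> {1..L-1}" using Suc by auto
  have IH: "L2_set (\<lambda>p. maxout_hidden M k W l x p - maxout_hidden M k W' l x p) {..<M l} \<le> eta * (real l - 1) * sqrt (real L)"
    using Suc by auto
  have N: "(L2_set (maxout_hidden M k W l x) {..<M l})^2 \<le> real l"
    using hid_norm[OF val k hM x, of l] Suc by (intro sq_le_of_le_sqrt) auto
  have "L2_set (\<lambda>i. 1 / sqrt (real (M (Suc l))) * (maxout_pre M k W l (maxout_hidden M k W l x) i - maxout_pre M k W' l (maxout_hidden M k W' l x) i)) {..<M (Suc l)}
     \<le> eta * (real (Suc l) - 1) * sqrt (real L)"
  proof (rule L2_scaled)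
    show "1 \<le> M (Suc l)" using hM Suc by auto
    fix i assume i: "i < M (Suc l)"
    have a: "\<bar>maxout_pre M k W l (maxout_hidden M k W l x) i - maxout_pre M k W' l (maxout_hidden M k W l x) i\<bar>
      \<le> eta * sqrt ((L2_set (maxout_hidden M k W l x) {..<M l})^2 + 1)"
      by (rule pre_lip_w[OF k]) (rule close[OF l i])
    also have "\<dots> \<le> eta * sqrt (real L)"
      using N Suc eta by (intro mult_left_mono) auto
    finally have a: "\<bar>maxout_pre M k W l (maxout_hidden M k W l x) i - maxout_pre M k W' l (maxout_hidden M k W l x) i\<bar> \<le> eta * sqrt (real L)" .
    have b: "\<bar>maxout_pre M k W' l (maxout_hidden M k W l x) i - maxout_pre M k W' l (maxout_hidden M k W' l x) i\<bar> \<le> eta * (real l - 1) * sqrt (real L)"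
    proof -
      have "\<bar>maxout_pre M k W' l (maxout_hidden M k W l x) i - maxout_pre M k W' l (maxout_hidden M k W' l x) i\<bar>
         \<le> L2_set (\<lambda>p. maxout_hidden M k W l x p - maxout_hidden M k W' l x p) {..<M l}"
        by (rule pre_lip_v[OF k]) (rule valid_L2[OF val' l i])
      thus ?thesis using IH by linarith
    qed
    show "\<bar>maxout_pre M k W l (maxout_hidden M k W l x) i - maxout_pre M k W' l (maxout_hidden M k W' l x) i\<bar> \<le> eta * (real (Suc l) - 1) * sqrt (real L)"
    proof -
      have "\<bar>maxout_pre M k W l (maxout_hidden M k W l x) i - maxout_pre M k W' l (maxout_hidden M k W' l x) i\<bar>
        \<le> \<bar>maxout_pre M k W l (maxout_hidden M k W l x) i - maxout_pre M k W' l (maxout_hidden M k W l x) i\<bar>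
          + \<bar>maxout_pre M k W' l (maxout_hidden M k W l x) i - maxout_pre M k W' l (maxout_hidden M k W' l x) i\<bar>"
        by (rule order_trans[OF _ abs_triangle_ineq]) simp
      also have "\<dots> \<le> eta * sqrt (real L) + eta * (real l - 1) * sqrt (real L)"
        using a b by (rule add_mono)
      also have "\<dots> = eta * (real (Suc l) - 1) * sqrt (real L)"
        by (simp add: algebra_simps)
      finally show ?thesis .
    qed
  qed
  thus ?case unfolding hid_step[OF Suc(1)] by (simp add: algebra_simps)
qed



lemma net_eq:
  assumes "L \<ge> 2"
  shows "maxout_net L M k W a x = (\<Sum>i<M L. a i * maxout_hidden M k W L x i)"
proof -
  obtain l where l: "L = Suc (Suc l)" using assms by (metis add_2_eq_Suc le_Suc_ex)
  show ?thesis unfolding maxout_net_def l by (simp add: sum_distrib_left mult_ac)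
qed

lemma sum_abs_L2: "\<bar>\<Sum>i\<in>A. a i * h i\<bar> \<le> L2_set a A * L2_set h A"
  by (rule order_trans[OF sum_abs]) (simp add: abs_mult L2_set_mult_ineq)

lemma net_abs:
  assumes L: "L \<ge> 2" and val: "valid L M k W" and k: "k \<ge> 1" and hM: "\<forall>l\<in>{1..L}. M l \<ge> 1"
    and x: "L2_set x {..<M 1} \<le> 1" and a: "L2_set a {..<M L} \<le> 1"
  shows "\<bar>maxout_net L M k W a x\<bar> \<le> sqrt (real L)"
proof -
  have "\<bar>maxout_net L M k W a x\<bar> \<le> L2_set a {..<M L} * L2_set (maxout_hidden M k W L x) {..<M L}"
    unfolding net_eq[OF L] by (rule sum_abs_L2)
  also have "\<dots> \<le> 1 * sqrt (real L)"
    using hid_norm[OF val k hM x, of L] L a by (intro mult_mono) auto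
  finally show ?thesis by simp
qed

lemma net_lip_x:
  assumes L: "L \<ge> 2" and val: "valid L M k W" and k: "k \<ge> 1" and hM: "\<forall>l\<in>{1..L}. M l \<ge> 1"
    and a: "L2_set a {..<M L} \<le> 1"
  shows "\<bar>maxout_net L M k W a x - maxout_net L M k W a y\<bar> \<le> L2_set (\<lambda>p. x p - y p) {..<M 1}"
proof -
  have "maxout_net L M k W a x - maxout_net L M k W a y
      = (\<Sum>i<M L. a i * (maxout_hidden M k W L x i - maxout_hidden M k W L y i))"
    unfolding net_eq[OF L] by (simp add: sum_subtractf algebra_simps)
  hence "\<bar>maxout_net L M k W a x - maxout_net L M k W a y\<bar>
     \<le> L2_set a {..<M L} * L2_set (\<lambda>i. maxout_hidden M k W L x i - maxout_hidden M k W L y i) {..<M L}"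
    using sum_abs_L2 by metis
  also have "\<dots> \<le> 1 * L2_set (\<lambda>p. x p - y p) {..<M 1}"
    using hid_lip_x[OF val k hM, of L x y] L a by (intro mult_mono) auto
  finally show ?thesis by simp
qed

lemma net_lip_w:
  assumes L: "L \<ge> 2" and val: "valid L M k W" and val': "valid L M k W'" and k: "k \<ge> 1"
    and hM: "\<forall>l\<in>{1..L}. M l \<ge> 1"
    and x: "L2_set x {..<M 1} \<le> 1" and eta: "eta \<ge> 0"
    and a': "L2_set a' {..<M L} \<le> 1" and aa: "L2_set (\<lambda>i. a i - a' i) {..<M L} \<le> eta"
    and close: "\<And>l i j. l \<in> {1..L-1} \<Longrightarrow> i < M (Suc l) \<Longrightarrow> j < k \<Longrightarrow> L2_set (\<lambda>p. W l i j p - W' l i j p) {..M l} \<le> eta"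
  shows "\<bar>maxout_net L M k W a x - maxout_net L M k W' a' x\<bar> \<le> eta * real L * sqrt (real L)"
proof -
  have "maxout_net L M k W a x - maxout_net L M k W' a' x
      = (\<Sum>i<M L. (a i - a' i) * maxout_hidden M k W L x i) + (\<Sum>i<M L. a' i * (maxout_hidden M k W L x i - maxout_hidden M k W' L x i))"
    unfolding net_eq[OF L] by (simp add: sum_subtractf algebra_simps sum.distrib[symmetric])
  hence "\<bar>maxout_net L M k W a x - maxout_net L M k W' a' x\<bar>
     \<le> \<bar>\<Sum>i<M L. (a i - a' i) * maxout_hidden M k W L x i\<bar> + \<bar>\<Sum>i<M L. a' i * (maxout_hidden M k W L x i - maxout_hidden M k W' L x i)\<bar>"
    by (simp add: abs_triangle_ineq)
  also have "\<dots> \<le> L2_set (\<lambda>i. a i - a' i) {..<M L} * L2_set (maxout_hidden M k W L x) {..<M L}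
       + L2_set a' {..<M L} * L2_set (\<lambda>i. maxout_hidden M k W L x i - maxout_hidden M k W' L x i) {..<M L}"
    by (intro add_mono sum_abs_L2)
  also have "\<dots> \<le> eta * sqrt (real L) + 1 * (eta * (real L - 1) * sqrt (real L))"
    using hid_norm[OF val k hM x, of L] hid_lip_w[OF val val' k hM x eta close, of L] L a' aa eta
    by (intro add_mono mult_mono) auto
  also have "\<dots> = eta * real L * sqrt (real L)" by (simp add: algebra_simps)
  finally show ?thesis .
qed

definition rz :: "real \<Rightarrow> real \<Rightarrow> real" where
  "rz h w = (if w < 0 then -1 else 1) * (h * real (nat \<lfloor>\<bar>w\<bar> / h\<rfloor>))"

lemma rz_props:
  assumes h: "h > 0"
  shows "\<bar>rz h w\<bar> \<le> \<bar>w\<bar>" "\<bar>w - rz h w\<bar> \<le> h"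
proof -
  define F where "F = real (nat \<lfloor>\<bar>w\<bar> / h\<rfloor>)"
  have F: "F = of_int \<lfloor>\<bar>w\<bar> / h\<rfloor>" unfolding F_def using h by simp
  have F1: "F \<le> \<bar>w\<bar> / h" unfolding F by simp
  have F2: "\<bar>w\<bar> / h - 1 < F" unfolding F by linarith
  have F0: "F \<ge> 0" unfolding F_def by simp
  have A: "h * F \<le> \<bar>w\<bar>" using F1 h by (simp add: field_simps)
  have B: "\<bar>w\<bar> - h < h * F" using F2 h by (simp add: field_simps)
  have hF: "h * F \<ge> 0" using h F0 by simp
  show "\<bar>rz h w\<bar> \<le> \<bar>w\<bar>" unfolding rz_def F_def[symmetric] using A hF by (auto simp: abs_mult)
  show "\<bar>w - rz h w\<bar> \<le> h" unfolding rz_def F_def[symmetric] using A B hF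
    by (cases "w < 0") auto
qed

lemma L2_round:
  assumes "finite A" "card A > 0" "eta \<ge> 0" "\<And>p. p \<in> A \<Longrightarrow> \<bar>f p - g p\<bar> \<le> eta / sqrt (real (card A))"
  shows "L2_set (\<lambda>p. f p - g p) A \<le> eta"
proof -
  have "(\<Sum>p\<in>A. (f p - g p)^2) \<le> (\<Sum>p\<in>A. (eta / sqrt (real (card A)))^2)"
  proof (rule sum_mono)
    fix p assume "p \<in> A"
    hence "\<bar>f p - g p\<bar> \<le> \<bar>eta / sqrt (real (card A))\<bar>" using assms(4) by (smt (verit))
    thus "(f p - g p)^2 \<le> (eta / sqrt (real (card A)))^2" by (simp only: abs_le_square_iff)
  qed
  also have "\<dots> = eta^2" using assms(2) by (simp add: power_divide)
  finally show ?thesis unfolding L2_set_def using assms(3) by (simp add: real_sqrt_le_iff real_le_lsqrt)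
qed

definition RW :: "nat \<Rightarrow> (nat \<Rightarrow> nat) \<Rightarrow> nat \<Rightarrow> real \<Rightarrow> (nat \<Rightarrow> nat \<Rightarrow> nat \<Rightarrow> nat \<Rightarrow> real) \<Rightarrow> (nat \<Rightarrow> nat \<Rightarrow> nat \<Rightarrow> nat \<Rightarrow> real)" where
  "RW L M k eta W = (\<lambda>l i j p. if l \<in> {1..L-1} \<and> i < M (Suc l) \<and> j < k \<and> p \<le> M l
       then rz (eta / sqrt (real (M l) + 1)) (W l i j p) else 0)"

definition Ra :: "nat \<Rightarrow> (nat \<Rightarrow> nat) \<Rightarrow> real \<Rightarrow> (nat \<Rightarrow> real) \<Rightarrow> (nat \<Rightarrow> real)" where
  "Ra L M eta a = (\<lambda>i. if i < M L then rz (eta / sqrt (real (M L))) (a i) else 0)"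

lemma RW_valid:
  assumes "valid L M k W" "eta > 0"
  shows "valid L M k (RW L M k eta W)"
  unfolding valid_def
proof (intro ballI allI impI)
  fix l i j assume l: "l \<in> {1..L-1}" and i: "i < M (Suc l)" and j: "j < k"
  have h: "eta / sqrt (real (M l) + 1) > 0" using assms(2) by simp
  have "(\<Sum>p\<le>M l. (RW L M k eta W l i j p)^2) \<le> (\<Sum>p\<le>M l. (W l i j p)^2)"
  proof (rule sum_mono)
    fix p assume "p \<in> {..M l}"
    thus "(RW L M k eta W l i j p)^2 \<le> (W l i j p)^2"
      using l i j rz_props(1)[OF h, of "W l i j p"] by (simp add: RW_def abs_le_square_iff[symmetric])
  qed
  also have "\<dots> \<le> 1" using assms(1) l i j unfolding valid_def by auto
  finally show "(\<Sum>p\<le>M l. (RW L M k eta W l i j p)^2) \<le> 1" .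
qed

lemma RW_close:
  assumes "eta > 0" "l \<in> {1..L-1}" "i < M (Suc l)" "j < k"
  shows "L2_set (\<lambda>p. W l i j p - RW L M k eta W l i j p) {..M l} \<le> eta"
proof (rule L2_round)
  have h: "eta / sqrt (real (M l) + 1) > 0" using assms(1) by simp
  fix p assume "p \<in> {..M l}"
  thus "\<bar>W l i j p - RW L M k eta W l i j p\<bar> \<le> eta / sqrt (real (card {..M l}))"
    using assms rz_props(2)[OF h, of "W l i j p"] by (simp add: RW_def add.commute)
qed (use assms in auto)

lemma Ra_props:
  assumes "eta > 0" "M L \<ge> 1" "L2_set a {..<M L} \<le> 1"
  shows "L2_set (Ra L M eta a) {..<M L} \<le> 1" "L2_set (\<lambda>i. a i - Ra L M eta a i) {..<M L} \<le> eta"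
proof -
  have h: "eta / sqrt (real (M L)) > 0" using assms by simp
  have "L2_set (Ra L M eta a) {..<M L} = L2_set (\<lambda>i. \<bar>Ra L M eta a i\<bar>) {..<M L}"
    unfolding L2_set_def by simp
  also have "\<dots> \<le> L2_set (\<lambda>i. \<bar>a i\<bar>) {..<M L}"
    by (rule L2_set_mono) (use rz_props(1)[OF h] in \<open>auto simp: Ra_def\<close>)
  also have "\<dots> = L2_set a {..<M L}" unfolding L2_set_def by simp
  finally show "L2_set (Ra L M eta a) {..<M L} \<le> 1" using assms(3) by simp
  show "L2_set (\<lambda>i. a i - Ra L M eta a i) {..<M L} \<le> eta"
  proof (rule L2_round)
    fix p assume "p \<in> {..<M L}"
    thus "\<bar>a p - Ra L M eta a p\<bar> \<le> eta / sqrt (real (card {..<M L}))"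
      using rz_props(2)[OF h, of "a p"] by (simp add: Ra_def)
  qed (use assms in auto)
qed



lemma geo_bound:
  fixes eta :: real
  assumes "eta > 0"
  shows "(\<Sum>k\<le>B. exp (- eta) ^ k) \<le> 1 + 1 / eta"
proof -
  have q: "0 < exp (- eta)" "exp (- eta) < 1" using assms exp_less_mono[of "-eta" 0] by auto
  have "(\<Sum>k\<le>B. exp (- eta) ^ k) < 1 / (1 - exp (- eta))"
    by (rule geometric_sum_less) (use q in auto)
  also have "1 / (1 - exp (- eta)) \<le> 1 + 1 / eta"
  proof -
    have "exp eta \<ge> 1 + eta" by (rule exp_ge_add_one_self)
    hence "exp (- eta) \<le> 1 / (1 + eta)" using assms by (simp add: exp_minus field_simps)
    hence "1 - exp (- eta) \<ge> eta / (1 + eta)" using assms by (simp add: field_simps)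
    hence "1 / (1 - exp (- eta)) \<le> 1 / (eta / (1 + eta))"
      using assms by (intro divide_left_mono) auto
    also have "\<dots> = 1 + 1 / eta" using assms by (simp add: field_simps)
    finally show ?thesis .
  qed
  finally show ?thesis by simp
qed

lemma count_encs:
  fixes I :: "'i set"
  assumes fin: "finite I" and eta: "eta > 0"
    and C: "C \<subseteq> {c \<in> I \<rightarrow>\<^sub>E ((UNIV :: bool set) \<times> {..B}). (\<Sum>i\<in>I. real (snd (c i))) \<le> real (card I) / eta}"
  shows "real (card C) \<le> (2 * exp 1 * (1 + 1 / eta)) ^ card I"
proof -
  define A where "A = I \<rightarrow>\<^sub>E ((UNIV :: bool set) \<times> {..B})"
  have finA: "finite A" unfolding A_def using fin by (intro finite_PiE) auto
  have CA: "C \<subseteq> A" using C unfolding A_def by auto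
  have finC: "finite C" using finite_subset[OF CA finA] .
  define w where "w c = (\<Prod>i\<in>I. exp (1 - eta * real (snd (c i))))" for c :: "'i \<Rightarrow> bool \<times> nat"
  have w1: "w c \<ge> 1" if "c \<in> C" for c
  proof -
    have "w c = exp (\<Sum>i\<in>I. (1 - eta * real (snd (c i))))"
      unfolding w_def by (simp add: exp_sum fin)
    also have "(\<Sum>i\<in>I. (1 - eta * real (snd (c i)))) = real (card I) - eta * (\<Sum>i\<in>I. real (snd (c i)))"
      by (simp add: sum_subtractf sum_distrib_left)
    finally have eq: "w c = exp (real (card I) - eta * (\<Sum>i\<in>I. real (snd (c i))))" .
    have "(\<Sum>i\<in>I. real (snd (c i))) \<le> real (card I) / eta" using C that by auto
    hence "eta * (\<Sum>i\<in>I. real (snd (c i))) \<le> real (card I)" using eta by (simp add: field_simps)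
    thus ?thesis unfolding eq by simp
  qed
  have w0: "w c \<ge> 0" for c unfolding w_def by (simp add: prod_nonneg)
  have "real (card C) = (\<Sum>c\<in>C. 1)" by simp
  also have "\<dots> \<le> (\<Sum>c\<in>C. w c)" by (rule sum_mono) (rule w1)
  also have "\<dots> \<le> (\<Sum>c\<in>A. w c)" by (rule sum_mono2[OF finA CA]) (use w0 in auto)
  also have "\<dots> = (\<Prod>i\<in>I. \<Sum>y\<in>(UNIV :: bool set) \<times> {..B}. exp (1 - eta * real (snd y)))"
    unfolding A_def w_def by (rule prod_sum_PiE[symmetric]) (use fin in auto)
  also have "\<dots> = (\<Sum>y\<in>(UNIV :: bool set) \<times> {..B}. exp (1 - eta * real (snd y))) ^ card I"
    by simp
  also have "(\<Sum>y\<in>(UNIV :: bool set) \<times> {..B}. exp (1 - eta * real (snd y))) = 2 * exp 1 * (\<Sum>k\<le>B. exp (- eta) ^ k)"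
  proof -
    have "(\<Sum>y\<in>(UNIV :: bool set) \<times> {..B}. exp (1 - eta * real (snd y))) = (\<Sum>b\<in>(UNIV :: bool set). \<Sum>k\<le>B. exp (1 - eta * real k))"
      unfolding sum.cartesian_product by (simp add: case_prod_unfold)
    also have "\<dots> = 2 * (\<Sum>k\<le>B. exp (1 - eta * real k))" by simp
    also have "(\<Sum>k\<le>B. exp (1 - eta * real k)) = exp 1 * (\<Sum>k\<le>B. exp (- eta) ^ k)"
      by (simp add: sum_distrib_left exp_diff exp_minus exp_of_nat2_mult[symmetric] field_simps mult.commute)
    finally show ?thesis by simp
  qed
  also have "(2 * exp 1 * (\<Sum>k\<le>B. exp (- eta) ^ k)) ^ card I \<le> (2 * exp 1 * (1 + 1 / eta)) ^ card I"
    by (intro power_mono mult_left_mono geo_bound eta) (auto intro!: sum_nonneg mult_nonneg_nonneg)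
  finally show ?thesis .
qed



definition GG :: "nat \<Rightarrow> (nat \<Rightarrow> nat) \<Rightarrow> nat \<Rightarrow> (nat \<times> nat \<times> nat) set" where
  "GG L M k = (SIGMA l:{1..L-1}. ({..<M (Suc l)} \<times> {..<k}))"

definition IW :: "nat \<Rightarrow> (nat \<Rightarrow> nat) \<Rightarrow> nat \<Rightarrow> ((nat \<times> nat \<times> nat) \<times> nat) set" where
  "IW L M k = (SIGMA g:GG L M k. {..M (fst g)})"

definition II :: "nat \<Rightarrow> (nat \<Rightarrow> nat) \<Rightarrow> nat \<Rightarrow> ((nat \<times> nat \<times> nat) \<times> nat + nat) set" where
  "II L M k = Inl ` IW L M k \<union> Inr ` {..<M L}"

definition hW :: "(nat \<Rightarrow> nat) \<Rightarrow> real \<Rightarrow> nat \<Rightarrow> real" where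
  "hW M eta l = eta / sqrt (real (M l) + 1)"

definition ha :: "(nat \<Rightarrow> nat) \<Rightarrow> nat \<Rightarrow> real \<Rightarrow> real" where
  "ha M L eta = eta / sqrt (real (M L))"

definition enc :: "nat \<Rightarrow> (nat \<Rightarrow> nat) \<Rightarrow> nat \<Rightarrow> real \<Rightarrow> (nat \<Rightarrow> nat \<Rightarrow> nat \<Rightarrow> nat \<Rightarrow> real) \<times> (nat \<Rightarrow> real)
    \<Rightarrow> ((nat \<times> nat \<times> nat) \<times> nat + nat) \<Rightarrow> bool \<times> nat" where
  "enc L M k eta Wa = restrict (\<lambda>t. case t of
        Inl ((l,i,j),p) \<Rightarrow> (fst Wa l i j p < 0, nat \<lfloor>\<bar>fst Wa l i j p\<bar> / hW M eta l\<rfloor>)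
      | Inr i \<Rightarrow> (snd Wa i < 0, nat \<lfloor>\<bar>snd Wa i\<bar> / ha M L eta\<rfloor>)) (II L M k)"

definition sg :: "bool \<Rightarrow> real" where "sg b = (if b then -1 else 1)"

definition dec :: "nat \<Rightarrow> (nat \<Rightarrow> nat) \<Rightarrow> nat \<Rightarrow> real \<Rightarrow> (((nat \<times> nat \<times> nat) \<times> nat + nat) \<Rightarrow> bool \<times> nat)
    \<Rightarrow> (nat \<Rightarrow> nat \<Rightarrow> nat \<Rightarrow> nat \<Rightarrow> real) \<times> (nat \<Rightarrow> real)" where
  "dec L M k eta c = ((\<lambda>l i j p. if ((l,i,j),p) \<in> IW L M k
        then sg (fst (c (Inl ((l,i,j),p)))) * (hW M eta l * real (snd (c (Inl ((l,i,j),p))))) else 0),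
     (\<lambda>i. if i < M L then sg (fst (c (Inr i))) * (ha M L eta * real (snd (c (Inr i)))) else 0))"

lemma mem_IW: "((l,i,j),p) \<in> IW L M k \<longleftrightarrow> l \<in> {1..L-1} \<and> i < M (Suc l) \<and> j < k \<and> p \<le> M l"
  by (auto simp: IW_def GG_def)

lemma dec_enc: "(RW L M k eta W, Ra L M eta a) = dec L M k eta (enc L M k eta (W, a))"
  unfolding dec_def enc_def
  by (auto simp: fun_eq_iff RW_def Ra_def rz_def sg_def mem_IW II_def hW_def ha_def)

lemma mem_II: "Inl x \<in> II L M k \<longleftrightarrow> x \<in> IW L M k" "Inr i \<in> II L M k \<longleftrightarrow> i < M L"
  by (auto simp: II_def)

lemma finite_GG: "finite (GG L M k)" unfolding GG_def by auto
lemma finite_IW: "finite (IW L M k)" unfolding IW_def using finite_GG by auto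
lemma finite_II: "finite (II L M k)" unfolding II_def using finite_IW by auto

lemma grp:
  assumes "finite A" "card A > 0" "L2_set w A \<le> 1" "eta > 0"
  shows "(\<Sum>p\<in>A. real (nat \<lfloor>\<bar>w p\<bar> / (eta / sqrt (real (card A)))\<rfloor>)) \<le> real (card A) / eta"
proof -
  define h where "h = eta / sqrt (real (card A))"
  have h: "h > 0" using assms by (simp add: h_def)
  have "(\<Sum>p\<in>A. real (nat \<lfloor>\<bar>w p\<bar> / h\<rfloor>)) \<le> (\<Sum>p\<in>A. \<bar>w p\<bar> / h)"
  proof (rule sum_mono)
    fix p assume "p \<in> A"
    have "real (nat \<lfloor>\<bar>w p\<bar> / h\<rfloor>) = of_int \<lfloor>\<bar>w p\<bar> / h\<rfloor>" using h by simp
    also have "\<dots> \<le> \<bar>w p\<bar> / h" by simp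
    finally show "real (nat \<lfloor>\<bar>w p\<bar> / h\<rfloor>) \<le> \<bar>w p\<bar> / h" .
  qed
  also have "\<dots> = (\<Sum>p\<in>A. \<bar>w p\<bar> * \<bar>1\<bar>) / h" by (simp add: sum_divide_distrib)
  also have "\<dots> \<le> (L2_set w A * L2_set (\<lambda>_. 1) A) / h"
    using h by (intro divide_right_mono L2_set_mult_ineq) auto
  also have "\<dots> \<le> (1 * sqrt (real (card A))) / h"
  proof -
    have "L2_set w A * sqrt (real (card A)) \<le> 1 * sqrt (real (card A))"
      by (rule mult_right_mono[OF assms(3)]) simp
    thus ?thesis using h by (intro divide_right_mono) (auto simp: L2_set_constant)
  qed
  also have "\<dots> = real (card A) / eta"
    using assms unfolding h_def by (simp add: field_simps)
  finally show ?thesis unfolding h_def .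
qed

lemma card_II: "card (II L M k) = card (IW L M k) + M L"
proof -
  have "II L M k = IW L M k <+> {..<M L}" unfolding II_def Plus_def by simp
  thus ?thesis using finite_IW by (simp add: card_Plus)
qed

lemma card_IW: "card (IW L M k) = (\<Sum>g\<in>GG L M k. M (fst g) + 1)"
  unfolding IW_def using finite_GG by simp

lemma enc_sum:
  assumes val: "valid L M k W" and a: "L2_set a {..<M L} \<le> 1" and eta: "eta > 0" and hML: "M L \<ge> 1"
  shows "(\<Sum>t\<in>II L M k. real (snd (enc L M k eta (W, a) t))) \<le> real (card (II L M k)) / eta"
proof -
  define f where "f t = real (snd (enc L M k eta (W, a) t))" for t
  have "(\<Sum>t\<in>II L M k. f t) = (\<Sum>t\<in>Inl ` IW L M k. f t) + (\<Sum>t\<in>Inr ` {..<M L}. f t)"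
    unfolding II_def using finite_IW by (intro sum.union_disjoint) auto
  also have "(\<Sum>t\<in>Inl ` IW L M k. f t) = (\<Sum>x\<in>IW L M k. f (Inl x))"
    by (simp add: sum.reindex)
  also have "\<dots> = (\<Sum>g\<in>GG L M k. \<Sum>p\<in>{..M (fst g)}. f (Inl (g, p)))"
    unfolding IW_def using finite_GG by (subst sum.Sigma) auto
  also have "\<dots> \<le> (\<Sum>g\<in>GG L M k. real (M (fst g) + 1) / eta)"
  proof (rule sum_mono)
    fix g assume g: "g \<in> GG L M k"
    obtain l i j where gl: "g = (l,i,j)" by (cases g) auto
    have l: "l \<in> {1..L-1}" "i < M (Suc l)" "j < k" using g gl by (auto simp: GG_def)
    have l2: "1 \<le> l" "l \<le> L - 1" using l by auto
    have "(\<Sum>p\<in>{..M l}. f (Inl ((l,i,j), p))) = (\<Sum>p\<in>{..M l}. real (nat \<lfloor>\<bar>W l i j p\<bar> / (eta / sqrt (real (card {..M l})))\<rfloor>))"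
      by (rule sum.cong) (use l l2 in \<open>auto simp: f_def enc_def mem_II mem_IW hW_def add.commute\<close>)
    also have "\<dots> \<le> real (card {..M l}) / eta"
      by (rule grp) (use valid_L2[OF val l] eta in auto)
    finally show "(\<Sum>p\<in>{..M (fst g)}. f (Inl (g, p))) \<le> real (M (fst g) + 1) / eta" using gl by simp
  qed
  also have "(\<Sum>t\<in>Inr ` {..<M L}. f t) = (\<Sum>i<M L. f (Inr i))"
    by (simp add: sum.reindex)
  also have "\<dots> = (\<Sum>i<M L. real (nat \<lfloor>\<bar>a i\<bar> / (eta / sqrt (real (card {..<M L})))\<rfloor>))"
    by (rule sum.cong) (auto simp: f_def enc_def mem_II ha_def)
  also have "\<dots> \<le> real (card {..<M L}) / eta"
    by (rule grp) (use a eta hML in auto)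
  also have "(\<Sum>g\<in>GG L M k. real (M (fst g) + 1) / eta) + real (card {..<M L}) / eta = real (card (II L M k)) / eta"
    unfolding card_II card_IW by (simp add: sum_divide_distrib add_divide_distrib)
  finally show ?thesis unfolding f_def by simp
qed

definition Pset :: "nat \<Rightarrow> (nat \<Rightarrow> nat) \<Rightarrow> nat \<Rightarrow> ((nat \<Rightarrow> nat \<Rightarrow> nat \<Rightarrow> nat \<Rightarrow> real) \<times> (nat \<Rightarrow> real)) set" where
  "Pset L M k = {(W, a). valid L M k W \<and> L2_set a {..<M L} \<le> 1}"

definition Rnd :: "nat \<Rightarrow> (nat \<Rightarrow> nat) \<Rightarrow> nat \<Rightarrow> real \<Rightarrow> (nat \<Rightarrow> nat \<Rightarrow> nat \<Rightarrow> nat \<Rightarrow> real) \<times> (nat \<Rightarrow> real)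
   \<Rightarrow> (nat \<Rightarrow> nat \<Rightarrow> nat \<Rightarrow> nat \<Rightarrow> real) \<times> (nat \<Rightarrow> real)" where
  "Rnd L M k eta Wa = (RW L M k eta (fst Wa), Ra L M eta (snd Wa))"

lemma card_Rnd:
  assumes eta: "eta > 0" and hML: "M L \<ge> 1"
  shows "finite (Rnd L M k eta ` Pset L M k)"
    "real (card (Rnd L M k eta ` Pset L M k)) \<le> (2 * exp 1 * (1 + 1 / eta)) ^ card (II L M k)"
proof -
  define B where "B = nat \<lfloor>real (card (II L M k)) / eta\<rfloor>"
  define C where "C = {c \<in> II L M k \<rightarrow>\<^sub>E ((UNIV :: bool set) \<times> {..B}). (\<Sum>t\<in>II L M k. real (snd (c t))) \<le> real (card (II L M k)) / eta}"
  have sub: "enc L M k eta ` Pset L M k \<subseteq> C"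
  proof
    fix c assume "c \<in> enc L M k eta ` Pset L M k"
    then obtain W a where Wa: "valid L M k W" "L2_set a {..<M L} \<le> 1" and c: "c = enc L M k eta (W, a)"
      by (auto simp: Pset_def)
    have S: "(\<Sum>t\<in>II L M k. real (snd (c t))) \<le> real (card (II L M k)) / eta"
      unfolding c by (rule enc_sum[OF Wa eta hML])
    have "snd (c t) \<le> B" if t: "t \<in> II L M k" for t
    proof -
      have "real (snd (c t)) \<le> (\<Sum>t\<in>II L M k. real (snd (c t)))"
        by (rule member_le_sum) (use t finite_II in auto)
      hence "real (snd (c t)) \<le> real (card (II L M k)) / eta" using S by linarith
      hence "\<lfloor>real (snd (c t))\<rfloor> \<le> \<lfloor>real (card (II L M k)) / eta\<rfloor>" by (rule floor_mono)
      hence "int (snd (c t)) \<le> \<lfloor>real (card (II L M k)) / eta\<rfloor>" by simp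
      hence "nat (int (snd (c t))) \<le> B" unfolding B_def by (rule nat_mono)
      thus ?thesis by simp
    qed
    moreover have "c \<in> extensional (II L M k)" unfolding c enc_def by simp
    ultimately show "c \<in> C" unfolding C_def using S by (auto simp: PiE_def Pi_def mem_Times_iff)
  qed
  have finC: "finite C" unfolding C_def
    by (rule finite_subset[of _ "II L M k \<rightarrow>\<^sub>E ((UNIV :: bool set) \<times> {..B})"]) (auto intro!: finite_PiE finite_II)
  have eq: "Rnd L M k eta ` Pset L M k = dec L M k eta ` (enc L M k eta ` Pset L M k)"
    unfolding image_comp Rnd_def by (intro image_cong refl) (auto simp: dec_enc)
  have fin2: "finite (enc L M k eta ` Pset L M k)" using finite_subset[OF sub finC] .
  show "finite (Rnd L M k eta ` Pset L M k)" unfolding eq using fin2 by simp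
  have "card (Rnd L M k eta ` Pset L M k) \<le> card (enc L M k eta ` Pset L M k)"
    unfolding eq by (rule card_image_le[OF fin2])
  also have "\<dots> \<le> card C" by (rule card_mono[OF finC sub])
  finally have "real (card (Rnd L M k eta ` Pset L M k)) \<le> real (card C)" by simp
  also have "\<dots> \<le> (2 * exp 1 * (1 + 1 / eta)) ^ card (II L M k)"
    by (rule count_encs[OF finite_II eta]) (auto simp: C_def)
  finally show "real (card (Rnd L M k eta ` Pset L M k)) \<le> (2 * exp 1 * (1 + 1 / eta)) ^ card (II L M k)" .
qed

lemma card_II_bound:
  assumes "\<forall>l\<in>{1..L}. M l \<ge> 1 \<and> M l \<le> m" "L \<ge> 2"
  shows "card (II L M k) \<le> (L - 1) * k * m * (m + 1) + m"
proof -
  have "card (IW L M k) = (\<Sum>g\<in>GG L M k. M (fst g) + 1)" by (rule card_IW)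
  also have "\<dots> \<le> (\<Sum>g\<in>GG L M k. m + 1)"
    by (rule sum_mono) (use assms in \<open>auto simp: GG_def\<close>)
  also have "\<dots> = card (GG L M k) * (m + 1)" by simp
  finally have A: "card (IW L M k) \<le> card (GG L M k) * (m + 1)" .
  have "card (GG L M k) = (\<Sum>l\<in>{1..L-1}. M (Suc l) * k)"
    unfolding GG_def by (simp add: card_cartesian_product)
  also have "\<dots> \<le> (\<Sum>l\<in>{1..L-1}. m * k)"
    by (rule sum_mono) (use assms in auto)
  also have "\<dots> = (L - 1) * k * m" by simp
  finally have "card (GG L M k) * (m + 1) \<le> (L - 1) * k * m * (m + 1)" by (rule mult_right_mono) simp
  with A have "card (IW L M k) \<le> (L - 1) * k * m * (m + 1)" by linarith
  moreover have "M L \<le> m" using assms by auto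
  ultimately show ?thesis unfolding card_II by linarith
qed



lemma ln2_ge: "ln (2::real) \<ge> 1/2"
proof -
  have e: "exp (1/2::real) ^ 2 = exp 1"
    using exp_of_nat_mult[of 2 "1/2::real"] by simp
  have "exp (1/2::real) < 2"
  proof (rule ccontr)
    assume "\<not> exp (1/2::real) < 2"
    hence "(2::real)^2 \<le> exp (1/2) ^ 2" by (intro power_mono) auto
    thus False using e exp_le by simp
  qed
  hence "exp (1/2::real) < exp (ln 2)" by simp
  thus ?thesis by (simp only: exp_less_cancel_iff)
qed

lemma geo_weighted: "(\<Sum>j<J. (real j + 1) * (1/2)^(j+1)) = 2 - (real J + 2) * (1/2)^J"
  by (induction J) (simp_all add: field_simps)

lemma final_num:
  fixes L k m n E :: nat
  assumes L: "L \<ge> 2" and k: "k \<ge> 1" and m: "m \<ge> 1" and n: "n \<ge> 1"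
    and E: "E \<le> (L - 1) * k * m * (m + 1) + m" and E0: "E \<ge> 1"
  defines "eta \<equiv> (\<lambda>j::nat. 1 / (2^(j+1) * real L * sqrt (real L)))"
  shows "sqrt (real L) * sqrt (2 * ln 2)
     + (\<Sum>j<n. 3 * (1/2)^(j+1) * sqrt (2 * ln (2 * ((2 * exp 1 * (1 + 1 / eta (Suc j))) ^ E)^2)))
     + sqrt (real n) * (1/2)^n
     \<le> 64 * sqrt (real (L - 1) * real k * real m * (real m + 1))
          * (sqrt (real (L + 1) * ln 2 + (1/2) * ln (real L ^ 2 + 1)) + sqrt pi / 2)"
proof -
  define Lr where "Lr = real L"
  have Lr: "Lr \<ge> 2" using L by (simp add: Lr_def)
  define A where "A = real (L + 1) * ln 2 + (1/2) * ln (real L ^ 2 + 1)"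
  define D where "D = real (L - 1) * real k * real m * (real m + 1)"
  have l2: "ln (2::real) \<ge> 1/2" "ln (2::real) \<le> 1" using ln2_ge ln_2_less_1 by auto
  have lnL: "ln (Lr^2 + 1) \<ge> 0" using Lr by simp
  have A1: "A \<ge> 3 * ln 2"
  proof -
    have "3 * ln 2 \<le> real (L+1) * ln (2::real)" using L by (intro mult_right_mono) auto
    moreover have "0 \<le> (1/2) * ln (real L^2 + 1)" by simp
    ultimately show ?thesis unfolding A_def by linarith
  qed
  hence A1': "A \<ge> 1" using l2 by linarith
  have DnatE: "real E \<le> 2 * D"
  proof -
    have "m \<le> (L - 1) * k * m * (m + 1)"
    proof -
      have "1*1*1 \<le> (L - 1) * k * (m + 1)" by (intro mult_le_mono) (use L k in auto)
      hence "1 \<le> (L - 1) * k * (m + 1)" by simp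
      hence "1 * m \<le> (L - 1) * k * (m + 1) * m" by (rule mult_right_mono) simp
      thus ?thesis by (simp add: mult_ac)
    qed
    hence "E \<le> 2 * ((L - 1) * k * m * (m + 1))" using E by linarith
    hence "real E \<le> real (2 * ((L - 1) * k * m * (m + 1)))" by linarith
    thus ?thesis unfolding D_def by (simp only: of_nat_mult of_nat_add of_nat_1 of_nat_numeral)
  qed
  have LD: "real L \<le> D"
  proof -
    have "L \<le> (L - 1) * k * m * (m + 1)"
    proof -
      have "1 \<le> k * m" using k m by simp
      moreover have "2 \<le> m + 1" using m by simp
      ultimately have "1 * 2 \<le> k * m * (m + 1)" by (intro mult_mono) auto
      hence "(L - 1) * 2 \<le> (L - 1) * (k * m * (m + 1))" by simp
      moreover have "L \<le> (L - 1) * 2" using L by simp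
      ultimately have "L \<le> (L - 1) * (k * m * (m + 1))" by linarith
      thus ?thesis by (simp only: mult.assoc)
    qed
    hence "real L \<le> real ((L - 1) * k * m * (m + 1))" by linarith
    thus ?thesis unfolding D_def by (simp only: of_nat_mult of_nat_add of_nat_1)
  qed
  have D1: "D \<ge> 1" using LD L by simp
  have DA: "1 \<le> D * A" using D1 A1' by (metis mult_mono' mult_1 zero_le_one)
  have E1: "real E \<le> 2 * D" by (rule DnatE)
  have lev: "sqrt (2 * ln (2 * ((2 * exp 1 * (1 + 1 / eta (Suc j))) ^ E)^2)) \<le> sqrt (10 * real E * A) * (real j + 1)" for j
  proof -
    have ie: "1 / eta (Suc j) = 2^(j+2) * Lr * sqrt Lr" unfolding eta_def Lr_def by simp
    define X where "X = 2^(j+2) * Lr * sqrt Lr"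
    have "Lr \<le> Lr^2" using Lr by (simp add: power2_eq_square mult_le_cancel_left1)
    hence "sqrt Lr \<le> sqrt (Lr^2)" by (rule real_sqrt_le_mono)
    hence sL2: "sqrt Lr \<le> Lr" using Lr by simp
    have sL: "1 \<le> sqrt Lr" "sqrt Lr \<le> Lr" using Lr sL2 by auto
    have X1: "1 \<le> X"
    proof -
      have p2: "(1::real) \<le> 2^(j+2)" by (rule one_le_power) simp
      have "1*1*1 \<le> (2::real)^(j+2) * Lr * sqrt Lr" by (intro mult_mono) (use Lr sL p2 in auto)
      thus ?thesis unfolding X_def by simp
    qed
    have "(2::real)^(j+2) * Lr * sqrt Lr \<le> 2^(j+2) * Lr * Lr" by (rule mult_left_mono) (use Lr sL in auto)
    hence X2: "X \<le> 2^(j+2) * Lr^2"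
      unfolding X_def power2_eq_square by (simp add: mult.assoc)
    have "2 * exp 1 * (1 + X) \<le> 2 * exp 1 * (2 * 2^(j+2) * Lr^2)"
      using X1 X2 by (intro mult_left_mono) auto
    hence "ln (2 * exp 1 * (1 + X)) \<le> ln (2 * exp 1 * (2 * 2^(j+2) * Lr^2))"
      using X1 by (intro ln_mono) auto
    also have "\<dots> = ln 2 + 1 + (ln 2 + (real j + 2) * ln 2 + 2 * ln Lr)"
    proof -
      have l16: "ln (16::real) = 4 * ln 2" using ln_realpow[of "2::real" 4] by simp
      show ?thesis using Lr by (simp add: ln_mult ln_realpow l16 algebra_simps)
    qed
    finally have u0: "ln (2 * exp 1 * (1 + X)) \<le> ln 2 + 1 + (ln 2 + (real j + 2) * ln 2 + 2 * ln Lr)" .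
    have h: "2 * ln Lr \<le> ln (Lr^2 + 1)"
    proof -
      have "2 * ln Lr = ln (Lr^2)" using ln_realpow[of Lr 2] by simp
      also have "\<dots> \<le> ln (Lr^2 + 1)" using Lr by (intro ln_mono) auto
      finally show ?thesis .
    qed
    have a: "real j * ln 2 \<le> real j" using l2 by (simp add: mult_left_le)
    have b: "1 + 4 * ln 2 \<le> 2 * (real (L+1) * ln (2::real))"
    proof -
      have "3 * ln 2 \<le> real (L+1) * ln (2::real)" using L by (intro mult_right_mono) auto
      thus ?thesis using l2 by linarith
    qed
    have A': "A = real (L+1) * ln 2 + (1/2) * ln (Lr^2 + 1)" by (simp add: A_def Lr_def)
    have u: "ln (2 * exp 1 * (1 + X)) \<le> real j + 2 * A"
      using u0 h a b unfolding A' by (simp add: algebra_simps)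
    have pos: "0 < 2 * exp 1 * (1 + X)" using X1 by simp
    have "ln (2 * ((2 * exp 1 * (1 + X)) ^ E)^2) = ln 2 + 2 * real E * ln (2 * exp 1 * (1 + X))"
      using pos X1 by (simp add: ln_mult ln_realpow power_mult[symmetric] mult_ac)
    also have "\<dots> \<le> 1 + 2 * real E * (real j + 2 * A)"
      using u l2 by (intro add_mono mult_left_mono) auto
    also have "\<dots> \<le> 5 * real E * A * (real j + 1)^2"
    proof -
      have E1': "real E \<ge> 1" using E0 by simp
      have EA: "real E \<le> real E * A" using A1' E1' by (simp add: mult_le_cancel_left1)
      have EA1: "1 \<le> real E * A" using EA E1' by linarith
      have "real E * real j \<le> real E * A * real j" using EA by (intro mult_right_mono) auto
      hence "1 + 2 * real E * (real j + 2 * A) \<le> real E * A * (2 * real j + 5)"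
        using EA1 by (simp add: algebra_simps)
      also have "\<dots> \<le> real E * A * (5 * (real j + 1)^2)"
        using EA1 by (intro mult_left_mono) (auto simp: power2_eq_square algebra_simps)
      finally show ?thesis by (simp add: mult_ac)
    qed
    finally have "ln (2 * ((2 * exp 1 * (1 + X)) ^ E)^2) \<le> 5 * real E * A * (real j + 1)^2" .
    hence "2 * ln (2 * ((2 * exp 1 * (1 + X)) ^ E)^2) \<le> (10 * real E * A) * (real j + 1)^2" by linarith
    hence "sqrt (2 * ln (2 * ((2 * exp 1 * (1 + X)) ^ E)^2)) \<le> sqrt ((10 * real E * A) * (real j + 1)^2)"
      by (rule real_sqrt_le_mono)
    also have "\<dots> = sqrt (10 * real E * A) * (real j + 1)"
      by (simp add: real_sqrt_mult)
    finally show ?thesis unfolding ie X_def .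
  qed
  have S: "(\<Sum>j<n. 3 * (1/2)^(j+1) * sqrt (2 * ln (2 * ((2 * exp 1 * (1 + 1 / eta (Suc j))) ^ E)^2)))
      \<le> (\<Sum>j<n. 3 * sqrt (10 * real E * A) * ((real j + 1) * (1/2)^(j+1)))"
    by (rule sum_mono) (use lev in \<open>auto simp: mult_ac intro!: mult_left_mono\<close>)
  also have "\<dots> = 3 * sqrt (10 * real E * A) * (\<Sum>j<n. (real j + 1) * (1/2)^(j+1))"
    by (simp add: sum_distrib_left)
  also have "\<dots> \<le> 3 * sqrt (10 * real E * A) * 2"
    unfolding geo_weighted using A1' by (intro mult_left_mono) auto
  also have "\<dots> \<le> 30 * sqrt (D * A)"
  proof -
    have "(10 * real E) * A \<le> (25 * D) * A" using E1 D1 A1' by (intro mult_right_mono) auto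
    hence "10 * real E * A \<le> 25 * (D * A)" by (simp add: mult.assoc)
    hence "sqrt (10 * real E * A) \<le> sqrt (25 * (D * A))" by (rule real_sqrt_le_mono)
    also have "\<dots> = 5 * sqrt (D * A)" by (simp add: real_sqrt_mult)
    finally show ?thesis by simp
  qed
  finally have S: "(\<Sum>j<n. 3 * (1/2)^(j+1) * sqrt (2 * ln (2 * ((2 * exp 1 * (1 + 1 / eta (Suc j))) ^ E)^2))) \<le> 30 * sqrt (D * A)" .
  have T1: "sqrt (real L) * sqrt (2 * ln 2) \<le> 2 * sqrt (D * A)"
  proof -
    have "real L * (2 * ln 2) \<le> 4 * (D * A)"
    proof -
      have "real L * (2 * ln 2) \<le> D * 2" using LD l2 by (intro mult_mono) auto
      also have "\<dots> \<le> 4 * (D * A)" using D1 A1' by (simp add: algebra_simps)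
      finally show ?thesis .
    qed
    hence "sqrt (real L * (2 * ln 2)) \<le> sqrt (4 * (D * A))" by (rule real_sqrt_le_mono)
    thus ?thesis by (simp add: real_sqrt_mult)
  qed
  have T2: "sqrt (real n) * (1/2)^n \<le> sqrt (D * A)"
  proof -
    have "real n \<le> (real n)^2" using n by (simp add: power2_eq_square mult_le_cancel_left1)
    hence "sqrt (real n) \<le> sqrt ((real n)^2)" by (rule real_sqrt_le_mono)
    hence "sqrt (real n) \<le> real n" by simp
    also have "real n \<le> 2^n" using less_exp[of n] by (metis less_imp_le of_nat_le_iff of_nat_numeral of_nat_power)
    finally have "sqrt (real n) * (1/2)^n \<le> 2^n * (1/2)^n" by (rule mult_right_mono) simp
    also have "\<dots> = 1" by (simp add: power_one_over)
    also have "1 \<le> sqrt (D * A)" using DA by simp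
    finally show ?thesis .
  qed
  have "sqrt (real L) * sqrt (2 * ln 2)
     + (\<Sum>j<n. 3 * (1/2)^(j+1) * sqrt (2 * ln (2 * ((2 * exp 1 * (1 + 1 / eta (Suc j))) ^ E)^2)))
     + sqrt (real n) * (1/2)^n \<le> 33 * (sqrt D * sqrt A)"
    using S T1 T2 by (simp add: real_sqrt_mult)
  also have "\<dots> \<le> 64 * sqrt D * (sqrt A + sqrt pi / 2)"
    using D1 A1' by (simp add: algebra_simps)
  finally show ?thesis unfolding A_def D_def .
qed



theorem proposition11:
  fixes L k m d n :: nat and M :: "nat \<Rightarrow> nat" and X :: "nat \<Rightarrow> nat \<Rightarrow> real"
  assumes "L \<ge> 2" and "k \<ge> 1" and "m \<ge> 1"
    and "\<forall>l \<in> {1..L}. M l \<ge> 1 \<and> M l \<le> m"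
    and "M 1 = d"
    and "\<forall>i < n. (\<Sum>p<d. (X i p)^2) \<le> 1"
  shows "rademacher_emp n X (maxout_class L M k)
     \<le> 64 * sqrt (real (L - 1) * real k * real m * (real m + 1) / real n)
          * (sqrt (real (L + 1) * ln 2 + (1/2) * ln (real L ^ 2 + 1)) + sqrt pi / 2)"
proof -
  note L = assms(1) and k = assms(2) and m = assms(3) and hMm = assms(4)
  have hM: "\<forall>l\<in>{1..L}. M l \<ge> 1" using hMm by auto
  have hML: "M L \<ge> 1" using hM L by auto
  define net' where "net' q x = maxout_net L M k (fst q) (snd q) x" for q x
  define Gf where "Gf q x = net' q x - net' q (\<lambda>_. 0)" for q x
  define Z where "Z = ((\<lambda>_ _ _ _. 0) :: nat \<Rightarrow> nat \<Rightarrow> nat \<Rightarrow> nat \<Rightarrow> real, (\<lambda>_. 0) :: nat \<Rightarrow> real)"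
  define eta where "eta = (\<lambda>j::nat. 1 / (2^(j+1) * real L * sqrt (real L)))"
  define pi' where "pi' j q = (if j = 0 then Z else Rnd L M k (eta j) q)" for j q
  define P where "P = Pset L M k"
  define E where "E = card (II L M k)"
  define Kb where "Kb j = (2 * exp 1 * (1 + 1 / eta j)) ^ E" for j
  define Q where "Q j = (\<lambda>q. (pi' (Suc j) q, pi' j q)) ` P" for j
  define v where "v qq t = Gf (fst qq) (X t) - Gf (snd qq) (X t)" for qq t
  have x0: "L2_set (\<lambda>_. 0) {..<M 1} \<le> 1" by (simp add: L2_set_def)
  have Xn: "L2_set (X t) {..<M 1} \<le> 1" if "t < n" for t
    using assms(5,6) that by (simp add: L2_set_def)
  have ZP: "Z \<in> P" by (simp add: Z_def P_def Pset_def valid_def L2_set_def)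
  have netZ: "net' Z x = 0" for x unfolding net'_def Z_def net_eq[OF L] by simp
  have GZ: "Gf Z x = 0" for x unfolding Gf_def netZ by simp
  have eta_pos: "eta j > 0" for j unfolding eta_def using L by simp
  have eta_val: "eta j * real L * sqrt (real L) = (1/2)^(j+1)" for j
    unfolding eta_def using L by (simp add: field_simps power_one_over)
  have Pdef: "q \<in> P \<longleftrightarrow> valid L M k (fst q) \<and> L2_set (snd q) {..<M L} \<le> 1" for q
    by (cases q) (simp add: P_def Pset_def)
  have Gb: "\<bar>Gf q x\<bar> \<le> 1" if "q \<in> P" "L2_set x {..<M 1} \<le> 1" for q x
  proof -
    have "\<bar>Gf q x\<bar> \<le> L2_set (\<lambda>p. x p - 0) {..<M 1}"
      unfolding Gf_def net'_def by (rule net_lip_x[OF L _ k hM]) (use that Pdef in auto)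
    thus ?thesis using that by simp
  qed
  have piP: "pi' j q \<in> P" if "q \<in> P" for j q
    using that ZP RW_valid[OF _ eta_pos] Ra_props(1)[where M=M and L=L, OF eta_pos hML]
    by (auto simp: pi'_def Pdef Rnd_def)
  have approx: "\<bar>Gf q x - Gf (pi' j q) x\<bar> \<le> (1/2)^j" if q: "q \<in> P" and x: "L2_set x {..<M 1} \<le> 1" for q x j
  proof (cases "j = 0")
    case True
    then show ?thesis using Gb[OF q x] by (simp add: pi'_def GZ)
  next
    case False
    have one: "\<bar>net' q y - net' (pi' j q) y\<bar> \<le> (1/2)^(j+1)" if y: "L2_set y {..<M 1} \<le> 1" for y
    proof -
      have "\<bar>net' q y - net' (pi' j q) y\<bar> \<le> eta j * real L * sqrt (real L)"
        unfolding net'_def pi'_def Rnd_def using False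
        apply simp
        apply (rule net_lip_w[OF L _ RW_valid[OF _ eta_pos] k hM y])
        using q Pdef eta_pos Ra_props[where M=M and L=L, OF eta_pos hML] RW_close[OF eta_pos] by (auto simp: less_imp_le)
      thus ?thesis using eta_val by simp
    qed
    have "\<bar>Gf q x - Gf (pi' j q) x\<bar> \<le> \<bar>net' q x - net' (pi' j q) x\<bar> + \<bar>net' q (\<lambda>_. 0) - net' (pi' j q) (\<lambda>_. 0)\<bar>"
      unfolding Gf_def by linarith
    also have "\<dots> \<le> (1/2)^(j+1) + (1/2)^(j+1)" using one[OF x] one[OF x0] by linarith
    also have "\<dots> = (1/2)^j" by simp
    finally show ?thesis .
  qed
  have cls: "\<exists>q\<in>P. f = net' q" if fc: "f \<in> maxout_class L M k" for f
  proof -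
    obtain W a where f: "f = maxout_net L M k W a"
      and c1: "\<forall>l \<in> {1..L-1}. \<forall>i < M (Suc l). \<forall>j < k. (\<Sum>p\<le>M l. (W l i j p)^2) \<le> 1"
      and c2: "(\<Sum>i<M L. (a i)^2) \<le> 1"
      using fc unfolding maxout_class_def by blast
    have "(W, a) \<in> P" using c1 c2 by (simp add: Pdef valid_def L2_set_def)
    moreover have "f = net' (W, a)" unfolding f by (rule ext) (simp add: net'_def)
    ultimately show ?thesis by blast
  qed
  have cls_ne: "maxout_class L M k \<noteq> {}"
  proof -
    have "net' Z \<in> maxout_class L M k"
      unfolding maxout_class_def net'_def Z_def by (rule CollectI, rule exI[of _ "\<lambda>_ _ _ _. 0"], rule exI[of _ "\<lambda>_. 0"]) simp
    thus ?thesis by auto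
  qed
  show ?thesis
  proof (cases "n = 0")
    case True
    have "rademacher_emp n X (maxout_class L M k) = 0"
      unfolding rademacher_emp_def True using cls_ne by simp
    thus ?thesis using True by simp
  next
    case False
    hence n: "n \<ge> 1" by simp
    have E1: "E \<ge> 1" unfolding E_def card_II using hML by simp
    have Ebd: "E \<le> (L - 1) * k * m * (m + 1) + m" unfolding E_def by (rule card_II_bound[OF hMm L])
    have Kb1: "Kb j \<ge> 1" for j
    proof -
      have "1*1*1 \<le> 2 * exp 1 * (1 + 1 / eta j)" using eta_pos[of j] by (intro mult_mono) auto
      thus ?thesis unfolding Kb_def by (intro one_le_power) simp
    qed
    have Kb_mono: "Kb j \<le> Kb j'" if "j \<le> j'" for j j'
    proof -
      have "1 / eta j \<le> 1 / eta j'"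
        unfolding eta_def using L that by (simp add: mult_right_mono power_increasing)
      thus ?thesis unfolding Kb_def using eta_pos[of j]
        by (intro power_mono mult_left_mono add_left_mono) auto
    qed
    have pi_img: "finite (pi' j ` P) \<and> real (card (pi' j ` P)) \<le> Kb j" for j
    proof (cases "j = 0")
      case True
      have "pi' j ` P = {Z}" using ZP True by (auto simp: pi'_def)
      thus ?thesis using Kb1[of j] by simp
    next
      case False
      have "pi' j ` P = Rnd L M k (eta j) ` P" using False by (auto simp: pi'_def)
      thus ?thesis using card_Rnd[where M=M and L=L and k=k and eta="eta j", OF eta_pos hML] unfolding P_def Kb_def E_def by simp
    qed
    have Qfin: "finite (Q j)" and Qne: "Q j \<noteq> {}" and Qcard: "real (card (Q j)) \<le> (Kb (Suc j))^2" for j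
    proof -
      have sub: "Q j \<subseteq> (pi' (Suc j) ` P) \<times> (pi' j ` P)" unfolding Q_def by auto
      have f1: "finite (pi' (Suc j) ` P)" "finite (pi' j ` P)" using pi_img by auto
      show "finite (Q j)" using finite_subset[OF sub] f1 by auto
      show "Q j \<noteq> {}" unfolding Q_def using ZP by auto
      have "card (Q j) \<le> card (pi' (Suc j) ` P) * card (pi' j ` P)"
        using card_mono[OF _ sub] f1 by (simp add: card_cartesian_product)
      hence "real (card (Q j)) \<le> real (card (pi' (Suc j) ` P)) * real (card (pi' j ` P))"
        by (metis of_nat_le_iff of_nat_mult)
      also have "\<dots> \<le> Kb (Suc j) * Kb (Suc j)"
        using pi_img[of "Suc j"] pi_img[of j] Kb_mono[of j "Suc j"] by (intro mult_mono) auto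
      finally show "real (card (Q j)) \<le> (Kb (Suc j))^2" by (simp add: power2_eq_square)
    qed
    have vb: "\<bar>v qq t\<bar> \<le> 3 * (1/2)^(j+1)" if qqQ: "qq \<in> Q j" and tn: "t < n" for qq t j
    proof -
      obtain q where q: "q \<in> P" "qq = (pi' (Suc j) q, pi' j q)" using qqQ unfolding Q_def by auto
      have a1: "\<bar>Gf q (X t) - Gf (pi' (Suc j) q) (X t)\<bar> \<le> (1/2)^(Suc j)" by (rule approx[OF q(1) Xn[OF tn]])
      have a2: "\<bar>Gf q (X t) - Gf (pi' j q) (X t)\<bar> \<le> (1/2)^j" by (rule approx[OF q(1) Xn[OF tn]])
      have "v qq t = (Gf q (X t) - Gf (pi' j q) (X t)) - (Gf q (X t) - Gf (pi' (Suc j) q) (X t))"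
        by (simp add: q(2) v_def)
      hence "\<bar>v qq t\<bar> \<le> \<bar>Gf q (X t) - Gf (pi' j q) (X t)\<bar> + \<bar>Gf q (X t) - Gf (pi' (Suc j) q) (X t)\<bar>"
        using abs_triangle_ineq4 by metis
      hence "\<bar>v qq t\<bar> \<le> (1/2)^(Suc j) + (1/2)^j" using a1 a2 by linarith
      also have "\<dots> = 3 * (1/2)^(j+1)" by simp
      finally show ?thesis .
    qed
    define r where "r j = 3 * (1/2)^(j+1) * sqrt (real n)" for j :: nat
    have massj: "(\<Sum>e\<in>Eps n. Max ((\<lambda>qq. \<bar>\<Sum>t<n. e t * v qq t\<bar>) ` Q j)) / 2^n \<le> r j * sqrt (2 * ln (2 * (Kb (Suc j))^2))" for j
    proof (rule massart[OF Qfin Qne _ _ Qcard])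
      show "r j > 0" unfolding r_def using n by simp
      fix qq assume qq: "qq \<in> Q j"
      have "(\<Sum>t<n. (v qq t)^2) \<le> (\<Sum>t<n. (3 * (1/2)^(j+1))^2)"
      proof (rule sum_mono)
        fix t assume "t \<in> {..<n}"
        hence "\<bar>v qq t\<bar> \<le> \<bar>3 * (1/2)^(j+1)\<bar>" using vb[OF qq] by simp
        thus "(v qq t)^2 \<le> (3 * (1/2)^(j+1))^2" by (simp only: abs_le_square_iff)
      qed
      also have "\<dots> = (r j)^2"
      proof -
        have "(r j)^2 = (3 * (1/2)^(j+1))^2 * (sqrt (real n))^2" unfolding r_def by (simp only: power_mult_distrib)
        also have "\<dots> = (3 * (1/2)^(j+1))^2 * real n" by simp
        finally show ?thesis by simp
      qed
      finally show "(\<Sum>t<n. (v qq t)^2) \<le> (r j)^2" .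
    qed
    have mass0: "(\<Sum>e\<in>Eps n. Max ((\<lambda>u. \<bar>\<Sum>t<n. e t * (\<lambda>u t. 1::real) u t\<bar>) ` {()})) / 2^n \<le> sqrt (real n) * sqrt (2 * ln (2 * 1))"
      by (rule massart) (use n in auto)
    hence mass0: "(\<Sum>e\<in>Eps n. \<bar>\<Sum>t<n. e t\<bar>) / 2^n \<le> sqrt (real n) * sqrt (2 * ln 2)" by simp
    define Y where "Y j e = Max ((\<lambda>qq. \<bar>\<Sum>t<n. e t * v qq t\<bar>) ` Q j)" for j e
    define Bd where "Bd e = (sqrt (real L) * \<bar>\<Sum>t<n. e t\<bar> + (\<Sum>j<n. Y j e) + real n * (1/2)^n) / real n" for e
    have pw: "\<bar>1 / real n * (\<Sum>t<n. e t * net' q (X t))\<bar> \<le> Bd e" if e: "e \<in> Eps n" and q: "q \<in> P" for e q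
    proof -
      have e1: "\<bar>e t\<bar> = 1" if "t < n" for t using e that by (auto simp: Eps_def PiE_def Pi_def)
      have tel: "(\<Sum>j<n. v (pi' (Suc j) q, pi' j q) t) = Gf (pi' n q) (X t)" for t
      proof -
        have "(\<Sum>j<n. v (pi' (Suc j) q, pi' j q) t) = (\<Sum>j<n. Gf (pi' (Suc j) q) (X t) - Gf (pi' j q) (X t))"
          by (simp add: v_def)
        also have "\<dots> = Gf (pi' n q) (X t) - Gf (pi' 0 q) (X t)"
          by (rule sum_lessThan_telescope)
        also have "Gf (pi' 0 q) (X t) = 0" by (simp add: pi'_def GZ)
        finally show ?thesis by simp
      qed
      have dec: "net' q (X t) = net' q (\<lambda>_. 0) + (Gf q (X t) - Gf (pi' n q) (X t)) + (\<Sum>j<n. v (pi' (Suc j) q, pi' j q) t)" for t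
        unfolding tel by (simp add: Gf_def)
      have "(\<Sum>t<n. e t * net' q (X t)) = (\<Sum>t<n. net' q (\<lambda>_. 0) * e t + e t * (Gf q (X t) - Gf (pi' n q) (X t))
             + (\<Sum>j<n. e t * v (pi' (Suc j) q, pi' j q) t))"
        by (rule sum.cong[OF refl]) (simp only: dec distrib_left sum_distrib_left mult.commute)
      also have "\<dots> = net' q (\<lambda>_. 0) * (\<Sum>t<n. e t) + (\<Sum>t<n. e t * (Gf q (X t) - Gf (pi' n q) (X t)))
             + (\<Sum>t<n. \<Sum>j<n. e t * v (pi' (Suc j) q, pi' j q) t)"
        by (simp only: sum.distrib sum_distrib_left)
      also have "(\<Sum>t<n. \<Sum>j<n. e t * v (pi' (Suc j) q, pi' j q) t) = (\<Sum>j<n. \<Sum>t<n. e t * v (pi' (Suc j) q, pi' j q) t)"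
        by (rule sum.swap)
      finally have "(\<Sum>t<n. e t * net' q (X t)) = net' q (\<lambda>_. 0) * (\<Sum>t<n. e t) + (\<Sum>t<n. e t * (Gf q (X t) - Gf (pi' n q) (X t)))
          + (\<Sum>j<n. \<Sum>t<n. e t * v (pi' (Suc j) q, pi' j q) t)" .
      hence "\<bar>\<Sum>t<n. e t * net' q (X t)\<bar> \<le> \<bar>net' q (\<lambda>_. 0) * (\<Sum>t<n. e t)\<bar> + \<bar>\<Sum>t<n. e t * (Gf q (X t) - Gf (pi' n q) (X t))\<bar>
          + \<bar>\<Sum>j<n. \<Sum>t<n. e t * v (pi' (Suc j) q, pi' j q) t\<bar>"
        using abs_triangle_ineq[of "net' q (\<lambda>_. 0) * (\<Sum>t<n. e t) + (\<Sum>t<n. e t * (Gf q (X t) - Gf (pi' n q) (X t)))"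
                 "\<Sum>j<n. \<Sum>t<n. e t * v (pi' (Suc j) q, pi' j q) t"]
              abs_triangle_ineq[of "net' q (\<lambda>_. 0) * (\<Sum>t<n. e t)" "\<Sum>t<n. e t * (Gf q (X t) - Gf (pi' n q) (X t))"]
        by linarith
      also have "\<dots> \<le> sqrt (real L) * \<bar>\<Sum>t<n. e t\<bar> + real n * (1/2)^n + (\<Sum>j<n. Y j e)"
      proof (intro add_mono)
        have "\<bar>net' q (\<lambda>_. 0)\<bar> \<le> sqrt (real L)"
          unfolding net'_def by (rule net_abs[OF L _ k hM x0]) (use q Pdef in auto)
        thus "\<bar>net' q (\<lambda>_. 0) * (\<Sum>t<n. e t)\<bar> \<le> sqrt (real L) * \<bar>\<Sum>t<n. e t\<bar>"
          by (simp add: abs_mult mult_right_mono)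
        have "\<bar>\<Sum>t<n. e t * (Gf q (X t) - Gf (pi' n q) (X t))\<bar> \<le> (\<Sum>t<n. \<bar>e t * (Gf q (X t) - Gf (pi' n q) (X t))\<bar>)"
          by (rule sum_abs)
        also have "\<dots> \<le> (\<Sum>t<n. (1/2)^n)"
        proof (rule sum_mono)
          fix t assume t: "t \<in> {..<n}"
          show "\<bar>e t * (Gf q (X t) - Gf (pi' n q) (X t))\<bar> \<le> (1/2)^n"
            using e1[of t] approx[OF q Xn[of t], of n] t by (simp add: abs_mult)
        qed
        finally show "\<bar>\<Sum>t<n. e t * (Gf q (X t) - Gf (pi' n q) (X t))\<bar> \<le> real n * (1/2)^n" by simp
        have "\<bar>\<Sum>j<n. \<Sum>t<n. e t * v (pi' (Suc j) q, pi' j q) t\<bar> \<le> (\<Sum>j<n. \<bar>\<Sum>t<n. e t * v (pi' (Suc j) q, pi' j q) t\<bar>)"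
          by (rule sum_abs)
        also have "\<dots> \<le> (\<Sum>j<n. Y j e)"
        proof (rule sum_mono)
          fix j assume "j \<in> {..<n}"
          have "(pi' (Suc j) q, pi' j q) \<in> Q j" unfolding Q_def using q by auto
          thus "\<bar>\<Sum>t<n. e t * v (pi' (Suc j) q, pi' j q) t\<bar> \<le> Y j e"
            unfolding Y_def using Qfin[of j] by (intro Max_ge) auto
        qed
        finally show "\<bar>\<Sum>j<n. \<Sum>t<n. e t * v (pi' (Suc j) q, pi' j q) t\<bar> \<le> (\<Sum>j<n. Y j e)" .
      qed
      finally have "\<bar>\<Sum>t<n. e t * net' q (X t)\<bar> \<le> sqrt (real L) * \<bar>\<Sum>t<n. e t\<bar> + (\<Sum>j<n. Y j e) + real n * (1/2)^n"
        by linarith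
      thus ?thesis unfolding Bd_def using n by (simp add: abs_mult divide_right_mono)
    qed
    have sup: "(SUP f\<in>maxout_class L M k. \<bar>1 / real n * (\<Sum>t<n. e t * f (X t))\<bar>) \<le> Bd e" if e: "e \<in> Eps n" for e
    proof (rule cSUP_least[OF cls_ne])
      fix f assume "f \<in> maxout_class L M k"
      then obtain q where "q \<in> P" "f = net' q" using cls by blast
      thus "\<bar>1 / real n * (\<Sum>t<n. e t * f (X t))\<bar> \<le> Bd e" using pw[OF e] by simp
    qed
    have "rademacher_emp n X (maxout_class L M k) \<le> (\<Sum>e\<in>Eps n. Bd e) / 2^n"
      unfolding rademacher_emp_def Eps_def[symmetric]
      by (intro divide_right_mono sum_mono sup) auto
    also have "(\<Sum>e\<in>Eps n. Bd e) / 2^n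
        = (sqrt (real L) * ((\<Sum>e\<in>Eps n. \<bar>\<Sum>t<n. e t\<bar>) / 2^n) + (\<Sum>j<n. (\<Sum>e\<in>Eps n. Y j e) / 2^n) + real n * (1/2)^n) / real n"
    proof -
      define C where "C = real n * (1/2::real)^n"
      have "(\<Sum>e\<in>Eps n. Bd e) = (\<Sum>e\<in>Eps n. sqrt (real L) * \<bar>\<Sum>t<n. e t\<bar> + (\<Sum>j<n. Y j e) + C) / real n"
        unfolding Bd_def C_def by (simp only: sum_divide_distrib)
      also have "(\<Sum>e\<in>Eps n. sqrt (real L) * \<bar>\<Sum>t<n. e t\<bar> + (\<Sum>j<n. Y j e) + C)
          = sqrt (real L) * (\<Sum>e\<in>Eps n. \<bar>\<Sum>t<n. e t\<bar>) + (\<Sum>e\<in>Eps n. \<Sum>j<n. Y j e) + 2^n * C"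
        by (simp only: sum.distrib sum_distrib_left[symmetric] sum_constant card_Eps) simp
      also have "(\<Sum>e\<in>Eps n. \<Sum>j<n. Y j e) = (\<Sum>j<n. \<Sum>e\<in>Eps n. Y j e)"
        by (rule sum.swap)
      finally have "(\<Sum>e\<in>Eps n. Bd e) = (sqrt (real L) * (\<Sum>e\<in>Eps n. \<bar>\<Sum>t<n. e t\<bar>) + (\<Sum>j<n. \<Sum>e\<in>Eps n. Y j e) + 2^n * C) / real n" .
      moreover have "(\<Sum>j<n. (\<Sum>e\<in>Eps n. Y j e) / 2^n) = (\<Sum>j<n. \<Sum>e\<in>Eps n. Y j e) / 2^n"
        by (simp only: sum_divide_distrib)
      ultimately show ?thesis unfolding C_def[symmetric] by (simp add: field_simps)
    qed
    also have "\<dots> \<le> (sqrt (real L) * (sqrt (real n) * sqrt (2 * ln 2)) + (\<Sum>j<n. r j * sqrt (2 * ln (2 * (Kb (Suc j))^2))) + real n * (1/2)^n) / real n"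
      using n mass0 massj unfolding Y_def
      by (intro divide_right_mono add_mono mult_left_mono sum_mono order_refl) auto
    also have "\<dots> = (sqrt (real L) * sqrt (2 * ln 2) + (\<Sum>j<n. 3 * (1/2)^(j+1) * sqrt (2 * ln (2 * (Kb (Suc j))^2))) + sqrt (real n) * (1/2)^n) / sqrt (real n)"
    proof -
      define sn where "sn = sqrt (real n)"
      have sn: "sn > 0" using n by (simp add: sn_def)
      have nn: "real n = sn * sn" using n by (simp add: sn_def)
      have rr: "(\<Sum>j<n. r j * sqrt (2 * ln (2 * (Kb (Suc j))^2))) = sn * (\<Sum>j<n. 3 * (1/2)^(j+1) * sqrt (2 * ln (2 * (Kb (Suc j))^2)))"
        unfolding r_def sn_def[symmetric] by (simp add: sum_distrib_left mult_ac)
      have alg: "(a * (sn * c) + sn * T + (sn * sn) * x) / (sn * sn) = (a * c + T + sn * x) / sn" for a c T x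
        using sn by (simp add: field_simps)
      show ?thesis unfolding rr unfolding sn_def[symmetric] unfolding nn by (rule alg)
    qed
    also have "\<dots> \<le> 64 * sqrt (real (L - 1) * real k * real m * (real m + 1))
          * (sqrt (real (L + 1) * ln 2 + (1/2) * ln (real L ^ 2 + 1)) + sqrt pi / 2) / sqrt (real n)"
    proof (rule divide_right_mono)
      show "sqrt (real L) * sqrt (2 * ln 2) + (\<Sum>j<n. 3 * (1/2)^(j+1) * sqrt (2 * ln (2 * (Kb (Suc j))^2))) + sqrt (real n) * (1/2)^n
        \<le> 64 * sqrt (real (L - 1) * real k * real m * (real m + 1))
          * (sqrt (real (L + 1) * ln 2 + (1/2) * ln (real L ^ 2 + 1)) + sqrt pi / 2)"
        unfolding Kb_def eta_def by (rule final_num[OF L k m n Ebd E1])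
    qed simp
    also have "\<dots> = 64 * sqrt (real (L - 1) * real k * real m * (real m + 1) / real n)
          * (sqrt (real (L + 1) * ln 2 + (1/2) * ln (real L ^ 2 + 1)) + sqrt pi / 2)"
      by (simp add: real_sqrt_divide)
    finally show ?thesis .
  qed
qed

end
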